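(* Let $(X,d,\mu)$ be as in the context, $1\le p<\infty$, $x\in X$, and assume $\mu$ is doubling at $x$. Suppose that one of the following estimates holds for all $0<2r\le R$ with a constant independent of $r$ and $R$: (a) $\operatorname{cap}_p(B_r,B_R)\gtrsim\mu(B_r)/r^p$; (b) $\operatorname{cap}_p(B_r,B_R)\gtrsim\mu(B_R)/R^p$; (c) $\operatorname{cap}_p(B_r,B_R)\gtrsim\frac{\mu(B_r)}{r^p}(\log\frac Rr)^{-p}$; (d) $\operatorname{cap}_p(B_r,B_R)\gtrsim\frac{\mu(B_R)}{R^p}(\log\frac Rr)^{-p}$; (e) $\operatorname{cap}_p(B_r,B_R)\gtrsim\frac{\mu(B_r)}{r^p}(\log\frac Rr)^{1-p}$; (f) $\operatorname{cap}_p(B_r,B_R)\gtrsim\frac{\mu(B_R)}{R^p}(\log\frac Rr)^{1-p}$; (g) $\operatorname{cap}_p(B_r,B_R)\gtrsim\frac{\mu(B_r)}{r^q}R^{q-p}$ for some $q>0$; (h) $\operatorname{cap}_p(B_r,B_R)\gtrsim\frac{\mu(B_R)}{R^q}r^{q-p}$ for some $q>0$. Then, respectively: (a) $p\in\underline{Q}(x)$; (b) $p\in\overline{Q}(x)$; (c) $p\le\sup\underline{Q}(x)$; (d) $p\ge\inf\overline{Q}(x)$; (e) $p\le\sup\underline{Q}(x)$; (f) $p\ge\inf\overline{Q}(x)$; (g) $q\in\underline{Q}(x)$; (h) $q\in\overline{Q}(x)$.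
   Context: $(X,d,\mu)$ metric space with positive complete Borel measure, $0<\mu(B)<\infty$ for all balls; $B_r=B(x,r)$. Doubling at $x$: $\mu(B(x,2r))\le C\mu(B(x,r))$ for all $r>0$. $\operatorname{cap}_p(E,\Omega)=\inf\{\int_\Omega g_u^p\,d\mu:u\in N^{1,p}_0(\Omega),u\ge1\text{ on }E\}$ with $N^{1,p}_0(\Omega)=\{f|_\Omega:f\in N^{1,p}(X),f=0 \text{ off }\Omega\}$, $N^{1,p}$ the Newtonian space defined via upper gradients, $g_u$ the minimal $p$-weak upper gradient. Exponent sets: $\underline{Q}_0(x)=\{q>0:\exists C_q,\ \mu(B_r)/\mu(B_R)\le C_q(r/R)^q,\ 0<r<R\le1\}$, $\overline{Q}_0(x)$ the same with $\ge$; if $X$ is unbounded, $\underline{Q}_\infty(x)$, $\overline{Q}_\infty(x)$ are defined identically but for $1\le r<R$. $\underline{Q}(x)=\underline{Q}_0(x)\cap\underline{Q}_\infty(x)$ and $\overline{Q}(x)=\overline{Q}_0(x)\cap\overline{Q}_\infty(x)$ if $X$ is unbounded; $\underline{Q}(x)=\underline{Q}_0(x)$, $\overline{Q}(x)=\overline{Q}_0(x)$ if $X$ is bounded. *)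

theory Defs
  imports "HOL-Analysis.Analysis"
begin

text \<open>X is the whole type 'a; mu is a positive complete Borel measure on X with
  0 < mu(B) < infinity for every ball B = ball y r, r > 0.\<close>

definition mms_standing :: "'a::metric_space measure \<Rightarrow> bool" where
  "mms_standing M \<longleftrightarrow>
     space M = UNIV \<and> sets borel \<subseteq> sets M \<and>
     (\<forall>A B. B \<in> null_sets M \<and> A \<subseteq> B \<longrightarrow> A \<in> sets M) \<and>
     (\<forall>y r. 0 < r \<longrightarrow> 0 < emeasure M (ball y r) \<and> emeasure M (ball y r) < \<infinity>)"

definition doubling_at :: "'a::metric_space measure \<Rightarrow> 'a \<Rightarrow> bool" where
  "doubling_at M x \<longleftrightarrow>
     (\<exists>C. \<forall>r>0. measure M (ball x (2 * r)) \<le> C * measure M (ball x r))"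

definition curve_length :: "(real \<Rightarrow> 'a::metric_space) \<Rightarrow> real \<Rightarrow> real \<Rightarrow> ereal" where
  "curve_length \<gamma> a b =
     (SUP ts \<in> {ts::real list. sorted ts \<and> ts \<noteq> [] \<and> hd ts = a \<and> last ts = b}.
        ereal (\<Sum>i<length ts - 1. dist (\<gamma> (ts ! i)) (\<gamma> (ts ! Suc i))))"

text \<open>Nonconstant compact rectifiable curves, arc-length parametrized: gamma : [0,l] -> X.\<close>
definition arclength_curve :: "(real \<Rightarrow> 'a::metric_space) \<Rightarrow> real \<Rightarrow> bool" where
  "arclength_curve \<gamma> l \<longleftrightarrow> 0 < l \<and> continuous_on {0..l} \<gamma> \<and>
     (\<forall>s t. 0 \<le> s \<and> s \<le> t \<and> t \<le> l \<longrightarrow> curve_length \<gamma> s t = ereal (t - s))"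

definition line_integral :: "(real \<Rightarrow> 'a) \<Rightarrow> real \<Rightarrow> ('a \<Rightarrow> ennreal) \<Rightarrow> ennreal" where
  "line_integral \<gamma> l \<rho> = (\<integral>\<^sup>+ t. \<rho> (\<gamma> t) * indicator {0..l} t \<partial>lborel)"

definition epow :: "ennreal \<Rightarrow> real \<Rightarrow> ennreal" where
  "epow a p = (if a = \<infinity> then \<infinity> else ennreal (enn2real a powr p))"

definition p_modulus :: "'a::metric_space measure \<Rightarrow> real \<Rightarrow> ((real \<Rightarrow> 'a) \<times> real) set \<Rightarrow> ennreal" where
  "p_modulus M p \<Gamma> =
     (INF \<rho> \<in> {\<rho>. \<rho> \<in> borel_measurable borel \<and> (\<forall>(\<gamma>, l) \<in> \<Gamma>. 1 \<le> line_integral \<gamma> l \<rho>)}.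
        \<integral>\<^sup>+ y. epow (\<rho> y) p \<partial>M)"

definition ug_ineq :: "('a \<Rightarrow> ereal) \<Rightarrow> ('a \<Rightarrow> ennreal) \<Rightarrow> (real \<Rightarrow> 'a) \<Rightarrow> real \<Rightarrow> bool" where
  "ug_ineq u g \<gamma> l \<longleftrightarrow>
     (if \<bar>u (\<gamma> 0)\<bar> = \<infinity> \<or> \<bar>u (\<gamma> l)\<bar> = \<infinity> then line_integral \<gamma> l g = \<infinity>
      else ennreal (real_of_ereal \<bar>u (\<gamma> 0) - u (\<gamma> l)\<bar>) \<le> line_integral \<gamma> l g)"

definition p_weak_ug :: "'a::metric_space measure \<Rightarrow> real \<Rightarrow> ('a \<Rightarrow> ereal) \<Rightarrow> ('a \<Rightarrow> ennreal) \<Rightarrow> bool" where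
  "p_weak_ug M p u g \<longleftrightarrow> g \<in> borel_measurable borel \<and>
     p_modulus M p {(\<gamma>, l). arclength_curve \<gamma> l \<and> \<not> ug_ineq u g \<gamma> l} = 0"

definition newtonian :: "'a::metric_space measure \<Rightarrow> real \<Rightarrow> ('a \<Rightarrow> ereal) set" where
  "newtonian M p = {u. u \<in> borel_measurable M \<and>
     (\<integral>\<^sup>+ y. epow (e2ennreal \<bar>u y\<bar>) p \<partial>M) < \<infinity> \<and>
     (\<exists>g. p_weak_ug M p u g \<and> (\<integral>\<^sup>+ y. epow (g y) p \<partial>M) < \<infinity>)}"

definition minimal_pwug :: "'a::metric_space measure \<Rightarrow> real \<Rightarrow> ('a \<Rightarrow> ereal) \<Rightarrow> ('a \<Rightarrow> ennreal) \<Rightarrow> bool" where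
  "minimal_pwug M p u g \<longleftrightarrow> p_weak_ug M p u g \<and> (\<integral>\<^sup>+ y. epow (g y) p \<partial>M) < \<infinity> \<and>
     (\<forall>g'. p_weak_ug M p u g' \<and> (\<integral>\<^sup>+ y. epow (g' y) p \<partial>M) < \<infinity> \<longrightarrow> (AE y in M. g y \<le> g' y))"

text \<open>cap_p(E, Omega): infimum over u in N^{1,p}_0(Omega) (represented by f in N^{1,p}(X)
  vanishing off Omega) with u >= 1 on E of the integral over Omega of g_u^p.\<close>
definition cap_p :: "'a::metric_space measure \<Rightarrow> real \<Rightarrow> 'a set \<Rightarrow> 'a set \<Rightarrow> ennreal" where
  "cap_p M p E \<Omega> =
     (INF u \<in> {u. u \<in> newtonian M p \<and> (\<forall>y. y \<notin> \<Omega> \<longrightarrow> u y = 0) \<and> (\<forall>y\<in>E. 1 \<le> u y)}.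
        \<integral>\<^sup>+ y. epow ((SOME g. minimal_pwug M p u g) y) p * indicator \<Omega> y \<partial>M)"

definition lowerQ0 :: "'a::metric_space measure \<Rightarrow> 'a \<Rightarrow> real set" where
  "lowerQ0 M x = {q. 0 < q \<and> (\<exists>C>0. \<forall>r R. 0 < r \<and> r < R \<and> R \<le> 1 \<longrightarrow>
      measure M (ball x r) / measure M (ball x R) \<le> C * (r / R) powr q)}"

definition upperQ0 :: "'a::metric_space measure \<Rightarrow> 'a \<Rightarrow> real set" where
  "upperQ0 M x = {q. 0 < q \<and> (\<exists>C>0. \<forall>r R. 0 < r \<and> r < R \<and> R \<le> 1 \<longrightarrow>
      measure M (ball x r) / measure M (ball x R) \<ge> C * (r / R) powr q)}"

definition lowerQinf :: "'a::metric_space measure \<Rightarrow> 'a \<Rightarrow> real set" where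
  "lowerQinf M x = {q. 0 < q \<and> (\<exists>C>0. \<forall>r R. 1 \<le> r \<and> r < R \<longrightarrow>
      measure M (ball x r) / measure M (ball x R) \<le> C * (r / R) powr q)}"

definition upperQinf :: "'a::metric_space measure \<Rightarrow> 'a \<Rightarrow> real set" where
  "upperQinf M x = {q. 0 < q \<and> (\<exists>C>0. \<forall>r R. 1 \<le> r \<and> r < R \<longrightarrow>
      measure M (ball x r) / measure M (ball x R) \<ge> C * (r / R) powr q)}"

definition lowerQ :: "'a::metric_space measure \<Rightarrow> 'a \<Rightarrow> real set" where
  "lowerQ M x = (if bounded (UNIV :: 'a set) then lowerQ0 M x else lowerQ0 M x \<inter> lowerQinf M x)"

definition upperQ :: "'a::metric_space measure \<Rightarrow> 'a \<Rightarrow> real set" where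
  "upperQ M x = (if bounded (UNIV :: 'a set) then upperQ0 M x else upperQ0 M x \<inter> upperQinf M x)"

end

theory Submission
  imports Defs
begin


lemma meas_M:
  assumes "mms_standing M" "f \<in> borel_measurable borel"
  shows "f \<in> borel_measurable M"
  using assms unfolding mms_standing_def measurable_def by auto

lemma arclength_dist:
  assumes "arclength_curve \<gamma> l" "0 \<le> s" "s \<le> t" "t \<le> l"
  shows "dist (\<gamma> s) (\<gamma> t) \<le> t - s"
proof -
  have "curve_length \<gamma> s t = ereal (t - s)" using assms unfolding arclength_curve_def by auto
  moreover have "ereal (\<Sum>i<length [s,t] - 1. dist (\<gamma> ([s,t] ! i)) (\<gamma> ([s,t] ! Suc i))) \<le> curve_length \<gamma> s t"
    unfolding curve_length_def by (rule SUP_upper) (use assms in auto)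
  ultimately show ?thesis by simp
qed

lemma curve_length_shift:
  "curve_length (\<lambda>t. \<gamma> (a + t)) s t = curve_length \<gamma> (a + s) (a + t)"
proof -
  let ?S = "\<lambda>s t. {ts::real list. sorted ts \<and> ts \<noteq> [] \<and> hd ts = s \<and> last ts = t}"
  let ?F = "\<lambda>\<gamma> ts. ereal (\<Sum>i<length ts - 1. dist (\<gamma> (ts ! i)) (\<gamma> (ts ! Suc i)))"
  have img: "?S (a+s) (a+t) = map ((+) a) ` ?S s t"
  proof
    show "map ((+) a) ` ?S s t \<subseteq> ?S (a+s) (a+t)"
      by (auto simp: sorted_iff_nth_mono hd_map last_map)
    show "?S (a+s) (a+t) \<subseteq> map ((+) a) ` ?S s t"
    proof
      fix ts assume ts: "ts \<in> ?S (a+s) (a+t)"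
      have "map (\<lambda>x. x - a) ts \<in> ?S s t"
        using ts by (auto simp: sorted_iff_nth_mono hd_map last_map)
      moreover have "ts = map ((+) a) (map (\<lambda>x. x - a) ts)" by (induct ts) auto
      ultimately show "ts \<in> map ((+) a) ` ?S s t" by blast
    qed
  qed
  have "curve_length \<gamma> (a + s) (a + t) = (SUP ts \<in> map ((+) a) ` ?S s t. ?F \<gamma> ts)"
    unfolding curve_length_def img ..
  also have "\<dots> = (SUP ts \<in> ?S s t. ?F \<gamma> (map ((+) a) ts))"
    by (simp add: image_comp)
  also have "\<dots> = (SUP ts \<in> ?S s t. ?F (\<lambda>t. \<gamma> (a + t)) ts)"
    by (rule SUP_cong) auto
  finally show ?thesis unfolding curve_length_def by simp
qed

lemma arclength_sub:
  assumes "arclength_curve \<gamma> l" "0 \<le> a" "a < b" "b \<le> l"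
  shows "arclength_curve (\<lambda>t. \<gamma> (a + t)) (b - a)"
  unfolding arclength_curve_def
proof (intro conjI allI impI)
  show "0 < b - a" using assms by simp
  have c: "continuous_on {0..l} \<gamma>" using assms(1) unfolding arclength_curve_def by auto
  show "continuous_on {0..b - a} (\<lambda>t. \<gamma> (a + t))"
    by (rule continuous_on_compose2[OF c]) (auto intro!: continuous_intros simp: assms)
  fix s t assume "0 \<le> s \<and> s \<le> t \<and> t \<le> b - a"
  thus "curve_length (\<lambda>t. \<gamma> (a + t)) s t = ereal (t - s)"
    using assms(1,2,4) unfolding curve_length_shift arclength_curve_def by auto
qed

definition clampc :: "(real \<Rightarrow> 'a) \<Rightarrow> real \<Rightarrow> real \<Rightarrow> 'a" where
  "clampc \<gamma> l t = \<gamma> (max 0 (min l t))"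

lemma clampc_cont:
  assumes "continuous_on {0..l} \<gamma>" "0 \<le> l"
  shows "continuous_on UNIV (clampc \<gamma> l)"
  unfolding clampc_def
  by (rule continuous_on_compose2[OF assms(1)]) (auto intro!: continuous_intros simp: assms)

lemma clampc_eq: "0 \<le> t \<Longrightarrow> t \<le> l \<Longrightarrow> clampc \<gamma> l t = \<gamma> t"
  unfolding clampc_def by simp

lemma curve_meas:
  fixes g :: "'a::metric_space \<Rightarrow> ennreal" and \<gamma> :: "real \<Rightarrow> 'a"
  assumes "continuous_on {0..l} \<gamma>" "0 \<le> l" "g \<in> borel_measurable borel" "0 \<le> a" "b \<le> l"
  shows "(\<lambda>s. g (\<gamma> s) * indicator {a..b} s) \<in> borel_measurable borel"
proof -
  have m: "clampc \<gamma> l \<in> borel_measurable borel"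
    by (rule borel_measurable_continuous_onI[OF clampc_cont[OF assms(1,2)]])
  have "(\<lambda>s. g (clampc \<gamma> l s) * indicator {a..b} s) \<in> borel_measurable borel"
    using m assms(3) by measurable
  moreover have "(\<lambda>s. g (clampc \<gamma> l s) * indicator {a..b} s) = (\<lambda>s. g (\<gamma> s) * indicator {a..b} s)"
    using assms(4,5) by (auto simp: clampc_eq indicator_def fun_eq_iff)
  ultimately show ?thesis by simp
qed

lemma line_integral_sub:
  fixes g :: "'a::metric_space \<Rightarrow> ennreal" and \<gamma> :: "real \<Rightarrow> 'a"
  assumes "continuous_on {0..l} \<gamma>" "0 \<le> l" "g \<in> borel_measurable borel" "0 \<le> a" "a \<le> b" "b \<le> l"
  shows "line_integral (\<lambda>t. \<gamma> (a + t)) (b - a) g = (\<integral>\<^sup>+ s. g (\<gamma> s) * indicator {a..b} s \<partial>lborel)"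
proof -
  have m: "(\<lambda>s. g (\<gamma> s) * indicator {a..b} s) \<in> borel_measurable borel"
    using curve_meas assms by blast
  have "(\<integral>\<^sup>+ s. g (\<gamma> s) * indicator {a..b} s \<partial>lborel)
        = ennreal \<bar>1\<bar> * (\<integral>\<^sup>+ x. g (\<gamma> (a + 1 * x)) * indicator {a..b} (a + 1 * x) \<partial>lborel)"
    using nn_integral_real_affine[OF m, of 1 a] by simp
  also have "\<dots> = line_integral (\<lambda>t. \<gamma> (a + t)) (b - a) g"
    unfolding line_integral_def by (auto intro!: nn_integral_cong simp: indicator_def)
  finally show ?thesis by simp
qed

lemma line_integral_sub_le:
  fixes g :: "'a::metric_space \<Rightarrow> ennreal" and \<gamma> :: "real \<Rightarrow> 'a"
  assumes "continuous_on {0..l} \<gamma>" "0 \<le> l" "g \<in> borel_measurable borel" "0 \<le> a" "a \<le> b" "b \<le> l"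
  shows "line_integral (\<lambda>t. \<gamma> (a + t)) (b - a) g \<le> line_integral \<gamma> l g"
proof -
  have "line_integral (\<lambda>t. \<gamma> (a + t)) (b - a) g = (\<integral>\<^sup>+ s. g (\<gamma> s) * indicator {a..b} s \<partial>lborel)"
    by (rule line_integral_sub[OF assms])
  also have "\<dots> \<le> (\<integral>\<^sup>+ s. g (\<gamma> s) * indicator {0..l} s \<partial>lborel)"
    by (rule nn_integral_mono) (use assms in \<open>auto simp: indicator_def\<close>)
  finally show ?thesis unfolding line_integral_def by simp
qed



lemma hk_of_nn:
  fixes g :: "'a::metric_space \<Rightarrow> ennreal" and \<gamma> :: "real \<Rightarrow> 'a"
  assumes "continuous_on {0..l} \<gamma>" "0 \<le> l" "g \<in> borel_measurable borel" "0 \<le> a" "a \<le> b" "b \<le> l"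
    and fin: "(\<integral>\<^sup>+ s. g (\<gamma> s) * indicator {a..b} s \<partial>lborel) < \<infinity>"
  shows "((\<lambda>s. enn2real (g (\<gamma> s))) has_integral enn2real (\<integral>\<^sup>+ s. g (\<gamma> s) * indicator {a..b} s \<partial>lborel)) {a..b}"
proof -
  let ?h = "\<lambda>s. g (\<gamma> s) * indicator {a..b} s"
  have m: "?h \<in> borel_measurable borel" using curve_meas assms by blast
  define F where "F = (\<lambda>s. enn2real (?h s))"
  have Fm: "F \<in> borel_measurable borel" unfolding F_def using m by measurable
  have ae: "AE s in lborel. ?h s \<noteq> \<infinity>"
    using nn_integral_noteq_infinite[of ?h lborel] m fin by (auto simp: less_top)
  have "(\<integral>\<^sup>+ s. ennreal (F s) \<partial>lborel) = (\<integral>\<^sup>+ s. ?h s \<partial>lborel)"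
    by (rule nn_integral_cong_AE) (use ae in \<open>auto simp: F_def less_top\<close>)
  also have "\<dots> = ennreal (enn2real (\<integral>\<^sup>+ s. ?h s \<partial>lborel))"
    using fin by (simp add: less_top)
  finally have "(F has_integral enn2real (\<integral>\<^sup>+ s. ?h s \<partial>lborel)) UNIV"
    by (intro nn_integral_has_integral[OF Fm]) (auto simp: F_def)
  moreover have "F = (\<lambda>s. if s \<in> {a..b} then enn2real (g (\<gamma> s)) else 0)"
    unfolding F_def by (auto simp: indicator_def fun_eq_iff)
  ultimately show ?thesis using has_integral_restrict_UNIV by metis
qed

lemma hk_min:
  fixes f G1 G2 :: "real \<Rightarrow> real"
  assumes l: "0 \<le> l"
    and i1: "G1 integrable_on {0..l}" and i2: "G2 integrable_on {0..l}"
    and i3: "G3 integrable_on {0..l}" and m3: "\<And>t. min (G1 t) (G2 t) \<le> G3 t"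
    and b1: "\<And>a b. 0 \<le> a \<Longrightarrow> a \<le> b \<Longrightarrow> b \<le> l \<Longrightarrow> \<bar>f b - f a\<bar> \<le> integral {a..b} G1"
    and b2: "\<And>a b. 0 \<le> a \<Longrightarrow> a \<le> b \<Longrightarrow> b \<le> l \<Longrightarrow> \<bar>f b - f a\<bar> \<le> integral {a..b} G2"
  shows "\<bar>f l - f 0\<bar> \<le> integral {0..l} G3"
proof (rule field_le_epsilon)
  fix e :: real assume e: "0 < e"
  define G where "G = G3"
  have cb: "cbox 0 l = {0..l}" by simp
  obtain d1 where d1: "gauge d1" and D1: "\<And>p. p tagged_partial_division_of cbox 0 l \<Longrightarrow> d1 fine p \<Longrightarrow>
      sum (\<lambda>(x,k). norm(Henstock_Kurzweil_Integration.content k *\<^sub>R G1 x - integral k G1)) p < e/3"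
    using Henstock_lemma[of G1 0 l "e/3"] i1 e by auto
  obtain d2 where d2: "gauge d2" and D2: "\<And>p. p tagged_partial_division_of cbox 0 l \<Longrightarrow> d2 fine p \<Longrightarrow>
      sum (\<lambda>(x,k). norm(Henstock_Kurzweil_Integration.content k *\<^sub>R G2 x - integral k G2)) p < e/3"
    using Henstock_lemma[of G2 0 l "e/3"] i2 e by auto
  obtain d3 where d3: "gauge d3" and D3: "\<And>p. p tagged_partial_division_of cbox 0 l \<Longrightarrow> d3 fine p \<Longrightarrow>
      sum (\<lambda>(x,k). norm(Henstock_Kurzweil_Integration.content k *\<^sub>R G x - integral k G)) p < e/3"
    using Henstock_lemma[of G 0 l "e/3"] i3 e unfolding G_def by auto
  have g: "gauge (\<lambda>x. d1 x \<inter> d2 x \<inter> d3 x)" using d1 d2 d3 by (simp add: gauge_Int)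
  obtain p where p: "p tagged_division_of {0..l}" and fp: "(\<lambda>x. d1 x \<inter> d2 x \<inter> d3 x) fine p"
    using fine_division_exists_real[OF g] by blast
  have fp1: "d1 fine p" and fp2: "d2 fine p" and fp3: "d3 fine p" using fp by (auto simp: fine_Int)
  have pp: "p tagged_partial_division_of cbox 0 l" using p by (auto simp: tagged_division_of_def)
  have fin: "finite p" using p by blast
  define e1 where "e1 = (\<lambda>(x,k). norm(Henstock_Kurzweil_Integration.content k *\<^sub>R G1 x - integral k G1))"
  define e2 where "e2 = (\<lambda>(x,k). norm(Henstock_Kurzweil_Integration.content k *\<^sub>R G2 x - integral k G2))"
  define e3 where "e3 = (\<lambda>(x,k). norm(Henstock_Kurzweil_Integration.content k *\<^sub>R G x - integral k G))"
  have key: "\<bar>f (Sup k) - f (Inf k)\<bar> \<le> integral k G + e1 (x,k) + e2 (x,k) + e3 (x,k)"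
    if xk: "(x,k) \<in> p" for x k
  proof -
    obtain u v where k: "k = cbox u v" and xk': "x \<in> k" and ksub: "k \<subseteq> {0..l}"
      using tagged_division_ofD(2,3,4)[OF p xk] by blast
    have kne: "k \<noteq> {}" using xk' by auto
    hence uv: "u \<le> v" using k by auto
    have kk: "k = {u..v}" using k by simp
    have u0: "0 \<le> u" and vl: "v \<le> l" using ksub kk uv by auto
    have SI: "Sup k = v" "Inf k = u" using uv kk by auto
    have c1: "\<bar>f v - f u\<bar> \<le> integral k G1" using b1[OF u0 uv vl] kk by simp
    have c2: "\<bar>f v - f u\<bar> \<le> integral k G2" using b2[OF u0 uv vl] kk by simp
    have h1: "integral k G1 \<le> Henstock_Kurzweil_Integration.content k * G1 x + e1 (x,k)" unfolding e1_def by auto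
    have h2: "integral k G2 \<le> Henstock_Kurzweil_Integration.content k * G2 x + e2 (x,k)" unfolding e2_def by auto
    have h3: "Henstock_Kurzweil_Integration.content k * G x \<le> integral k G + e3 (x,k)" unfolding e3_def by auto
    have e1p: "0 \<le> e1 (x,k)" "0 \<le> e2 (x,k)" "0 \<le> e3 (x,k)" unfolding e1_def e2_def e3_def by auto
    have ck: "0 \<le> Henstock_Kurzweil_Integration.content k" by simp
    show ?thesis
    proof (cases "G1 x \<le> G3 x")
      case True
      hence "Henstock_Kurzweil_Integration.content k * G1 x \<le> Henstock_Kurzweil_Integration.content k * G x" unfolding G_def using ck by (simp add: mult_left_mono)
      thus ?thesis unfolding SI using c1 h1 h3 e1p by linarith
    next
      case False
      hence "G2 x \<le> G3 x" using m3[of x] by linarith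
      hence "Henstock_Kurzweil_Integration.content k * G2 x \<le> Henstock_Kurzweil_Integration.content k * G x" unfolding G_def using ck by (simp add: mult_left_mono)
      thus ?thesis unfolding SI using c2 h2 h3 e1p by linarith
    qed
  qed
  have "f l - f 0 = (\<Sum>(x,k)\<in>p. f (Sup k) - f (Inf k))"
    using additive_tagged_division_1[OF l p, of f] by simp
  hence "\<bar>f l - f 0\<bar> \<le> (\<Sum>(x,k)\<in>p. \<bar>f (Sup k) - f (Inf k)\<bar>)"
    by (metis (mono_tags, lifting) sum_abs case_prod_beta sum.cong)
  also have "\<dots> \<le> (\<Sum>(x,k)\<in>p. integral k G + e1 (x,k) + e2 (x,k) + e3 (x,k))"
    by (rule sum_mono) (use key in auto)
  also have "\<dots> = (\<Sum>(x,k)\<in>p. integral k G) + sum e1 p + sum e2 p + sum e3 p"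
    by (simp add: sum.distrib case_prod_beta)
  also have "(\<Sum>(x,k)\<in>p. integral k G) = integral {0..l} G"
    using integral_combine_tagged_division_topdown[of G 0 l p] i3 p unfolding G_def by simp
  also have "sum e1 p < e/3" using D1[OF pp fp1] unfolding e1_def .
  also have "sum e2 p < e/3" using D2[OF pp fp2] unfolding e2_def .
  also have "sum e3 p < e/3" using D3[OF pp fp3] unfolding e3_def .
  finally show "\<bar>f l - f 0\<bar> \<le> integral {0..l} G3 + e" unfolding G_def by simp
qed


lemma enn2real_min_le: "min (enn2real x) (enn2real y) \<le> enn2real (min x y)"
  by (cases "x = \<infinity>"; cases "y = \<infinity>") (auto simp: min_def enn2real_mono less_top intro: enn2real_nonneg)

lemma curve_min:
  fixes u :: "'a::metric_space \<Rightarrow> ereal" and g1 g2 :: "'a \<Rightarrow> ennreal" and \<gamma> :: "real \<Rightarrow> 'a"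
  assumes ac: "arclength_curve \<gamma> l"
    and m1: "g1 \<in> borel_measurable borel" and m2: "g2 \<in> borel_measurable borel"
    and f1: "line_integral \<gamma> l g1 < \<infinity>" and f2: "line_integral \<gamma> l g2 < \<infinity>"
    and s1: "\<And>a b. 0 \<le> a \<Longrightarrow> a < b \<Longrightarrow> b \<le> l \<Longrightarrow> ug_ineq u g1 (\<lambda>t. \<gamma> (a + t)) (b - a)"
    and s2: "\<And>a b. 0 \<le> a \<Longrightarrow> a < b \<Longrightarrow> b \<le> l \<Longrightarrow> ug_ineq u g2 (\<lambda>t. \<gamma> (a + t)) (b - a)"
  shows "ug_ineq u (\<lambda>y. min (g1 y) (g2 y)) \<gamma> l"
proof -
  have l: "0 < l" and c: "continuous_on {0..l} \<gamma>" using ac unfolding arclength_curve_def by auto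
  have m3: "(\<lambda>y. min (g1 y) (g2 y)) \<in> borel_measurable borel" using m1 m2 by measurable
  have le1: "line_integral (\<lambda>t. \<gamma> (a + t)) (b - a) g1 \<le> line_integral \<gamma> l g1"
    if "0 \<le> a" "a \<le> b" "b \<le> l" for a b
    using line_integral_sub_le[OF c _ m1] that l by simp
  have fu: "\<bar>u (\<gamma> t)\<bar> \<noteq> \<infinity>" if t: "0 \<le> t" "t \<le> l" for t
  proof
    assume inf: "\<bar>u (\<gamma> t)\<bar> = \<infinity>"
    show False
    proof (cases "t = 0")
      case True
      have "ug_ineq u g1 (\<lambda>s. \<gamma> (0 + s)) (l - 0)" using s1[of 0 l] l by simp
      hence "line_integral \<gamma> l g1 = \<infinity>" using inf True unfolding ug_ineq_def by simp
      thus False using f1 by simp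
    next
      case False
      hence "0 < t" using t by simp
      have "ug_ineq u g1 (\<lambda>s. \<gamma> (0 + s)) (t - 0)" using s1[of 0 t] t \<open>0 < t\<close> by simp
      hence "line_integral (\<lambda>s. \<gamma> (0 + s)) (t - 0) g1 = \<infinity>" using inf unfolding ug_ineq_def by simp
      moreover have "line_integral (\<lambda>s. \<gamma> (0 + s)) (t - 0) g1 \<le> line_integral \<gamma> l g1"
        using le1[of 0 t] t by simp
      ultimately show False using f1 by simp
    qed
  qed
  define f where "f t = real_of_ereal (u (\<gamma> t))" for t
  have uf: "u (\<gamma> t) = ereal (f t)" if "0 \<le> t" "t \<le> l" for t
    using fu[OF that] unfolding f_def by (cases "u (\<gamma> t)") auto
  define G1 where "G1 s = enn2real (g1 (\<gamma> s))" for s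
  define G2 where "G2 s = enn2real (g2 (\<gamma> s))" for s
  define G3 where "G3 s = enn2real (min (g1 (\<gamma> s)) (g2 (\<gamma> s)))" for s
  have bnd: "\<bar>f b - f a\<bar> \<le> integral {a..b} (\<lambda>s. enn2real (g (\<gamma> s)))"
    if g: "g \<in> borel_measurable borel" and lg: "line_integral \<gamma> l g < \<infinity>"
      and sg: "\<And>a b. 0 \<le> a \<Longrightarrow> a < b \<Longrightarrow> b \<le> l \<Longrightarrow> ug_ineq u g (\<lambda>t. \<gamma> (a + t)) (b - a)"
      and ab: "0 \<le> a" "a \<le> b" "b \<le> l" for g a b
  proof (cases "a = b")
    case True thus ?thesis by simp
  next
    case False
    hence ab': "a < b" using ab by simp
    let ?N = "\<integral>\<^sup>+ s. g (\<gamma> s) * indicator {a..b} s \<partial>lborel"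
    have eqN: "line_integral (\<lambda>t. \<gamma> (a + t)) (b - a) g = ?N"
      by (rule line_integral_sub[OF c _ g ab]) (use l in simp)
    have "?N \<le> line_integral \<gamma> l g"
      using line_integral_sub_le[OF c _ g ab] l eqN by simp
    hence Nf: "?N < \<infinity>" using lg by simp
    have hk: "((\<lambda>s. enn2real (g (\<gamma> s))) has_integral enn2real ?N) {a..b}"
      by (rule hk_of_nn[OF c _ g ab Nf]) (use l in simp)
    have ua: "u (\<gamma> a) = ereal (f a)" and ub: "u (\<gamma> b) = ereal (f b)" using uf ab by auto
    have "ug_ineq u g (\<lambda>t. \<gamma> (a + t)) (b - a)" using sg[OF ab(1) ab' ab(3)] .
    hence "ennreal (\<bar>f a - f b\<bar>) \<le> ?N" using ua ub eqN unfolding ug_ineq_def by simp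
    hence "enn2real (ennreal \<bar>f a - f b\<bar>) \<le> enn2real ?N"
      using Nf by (intro enn2real_mono) (auto simp: less_top)
    hence "\<bar>f b - f a\<bar> \<le> enn2real ?N" by (simp add: abs_minus_commute)
    thus ?thesis using integral_unique[OF hk] by simp
  qed
  let ?LI = "line_integral \<gamma> l (\<lambda>y. min (g1 y) (g2 y))"
  have LIle: "?LI \<le> line_integral \<gamma> l g1"
    unfolding line_integral_def by (rule nn_integral_mono) (auto simp: indicator_def)
  hence LIf: "?LI < \<infinity>" using f1 by simp
  have hk1: "((\<lambda>s. enn2real (g1 (\<gamma> s))) has_integral enn2real (line_integral \<gamma> l g1)) {0..l}"
    unfolding line_integral_def by (rule hk_of_nn[OF c _ m1]) (use l f1 in \<open>auto simp: line_integral_def\<close>)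
  have hk2: "((\<lambda>s. enn2real (g2 (\<gamma> s))) has_integral enn2real (line_integral \<gamma> l g2)) {0..l}"
    unfolding line_integral_def by (rule hk_of_nn[OF c _ m2]) (use l f2 in \<open>auto simp: line_integral_def\<close>)
  have hk3: "((\<lambda>s. enn2real (min (g1 (\<gamma> s)) (g2 (\<gamma> s)))) has_integral enn2real ?LI) {0..l}"
    unfolding line_integral_def
    by (rule hk_of_nn[OF c _ m3, simplified]) (use l LIf in \<open>auto simp: line_integral_def\<close>)
  have main: "\<bar>f l - f 0\<bar> \<le> integral {0..l} G3"
  proof (rule hk_min[of l G1 G2 G3 f])
    show "0 \<le> l" using l by simp
    show "G1 integrable_on {0..l}" unfolding G1_def using hk1 by blast
    show "G2 integrable_on {0..l}" unfolding G2_def using hk2 by blast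
    show "G3 integrable_on {0..l}" unfolding G3_def using hk3 by blast
    show "min (G1 t) (G2 t) \<le> G3 t" for t unfolding G1_def G2_def G3_def by (rule enn2real_min_le)
    show "\<bar>f b - f a\<bar> \<le> integral {a..b} G1" if "0 \<le> a" "a \<le> b" "b \<le> l" for a b
      unfolding G1_def by (rule bnd[OF m1 f1 s1 that])
    show "\<bar>f b - f a\<bar> \<le> integral {a..b} G2" if "0 \<le> a" "a \<le> b" "b \<le> l" for a b
      unfolding G2_def by (rule bnd[OF m2 f2 s2 that])
  qed
  hence "\<bar>f 0 - f l\<bar> \<le> enn2real ?LI" using integral_unique[OF hk3] unfolding G3_def
    by (simp add: abs_minus_commute)
  hence "ennreal \<bar>f 0 - f l\<bar> \<le> ennreal (enn2real ?LI)" by (rule ennreal_leI)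
  also have "\<dots> = ?LI" using LIf by (simp add: less_top)
  finally have *: "ennreal \<bar>f 0 - f l\<bar> \<le> ?LI" .
  have u0: "u (\<gamma> 0) = ereal (f 0)" and ul: "u (\<gamma> l) = ereal (f l)" using uf l by auto
  show ?thesis unfolding ug_ineq_def using * u0 ul by simp
qed


lemma epow_fin: "0 \<le> v \<Longrightarrow> epow (ennreal v) p = ennreal (v powr p)"
  unfolding epow_def by simp

lemma epow_top[simp]: "epow top p = top"
  unfolding epow_def by simp

lemma epow_zero[simp]: "0 < p \<Longrightarrow> epow 0 p = 0"
  unfolding epow_def by simp

lemma epow_one[simp]: "epow 1 p = 1"
  unfolding epow_def by simp

lemma epow_mono: assumes "a \<le> b" "0 \<le> p" shows "epow a p \<le> epow b p"
proof (cases "b = \<infinity>")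
  case True thus ?thesis by simp
next
  case False
  hence "a \<noteq> \<infinity>" using assms by (auto simp: top_unique)
  thus ?thesis using False assms unfolding epow_def
    by (auto intro!: ennreal_leI powr_mono2 enn2real_mono simp: less_top)
qed

lemma epow_strict: assumes "a < b" "0 < p" shows "epow a p < epow b p"
proof (cases "b = \<infinity>")
  case True
  hence "a \<noteq> \<infinity>" using assms by auto
  thus ?thesis using True unfolding epow_def by simp
next
  case False
  hence "a \<noteq> \<infinity>" using assms by (auto simp: top_unique)
  have "enn2real a < enn2real b" using assms False \<open>a \<noteq> \<infinity>\<close>
    by (simp add: enn2real_less_iff less_top)
  moreover have "0 \<le> enn2real a" by simp
  ultimately have "enn2real a powr p < enn2real b powr p"
    using assms(2) by (simp add: powr_less_mono2)
  moreover have "0 \<le> enn2real a powr p" by simp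
  moreover have "0 < enn2real b powr p" using calculation by linarith
  ultimately show ?thesis using False \<open>a \<noteq> \<infinity>\<close> unfolding epow_def
    by (simp add: ennreal_lessI)
qed

lemma epow_cmult:
  assumes "0 < c" "0 < p"
  shows "epow (ennreal c * a) p = ennreal (c powr p) * epow a p"
proof (cases "a = \<infinity>")
  case True thus ?thesis using assms by (simp add: ennreal_mult_top)
next
  case False
  hence "ennreal c * a \<noteq> \<infinity>" by (simp add: ennreal_mult_eq_top_iff)
  moreover have "enn2real (ennreal c * a) = c * enn2real a" using assms by (simp add: enn2real_mult)
  ultimately show ?thesis using False assms unfolding epow_def
    by (simp add: powr_mult ennreal_mult)
qed

lemma epow_borel: "(\<lambda>a. epow a p) \<in> borel_measurable borel"
proof -
  have "(\<lambda>a. epow a p) = (\<lambda>a. if a \<in> {top} then top else ennreal (enn2real a powr p))"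
    by (auto simp: epow_def fun_eq_iff)
  also have "\<dots> \<in> borel_measurable borel"
    by (intro measurable_If_set) auto
  finally show ?thesis .
qed

lemma epow_meas[measurable]:
  "g \<in> borel_measurable N \<Longrightarrow> (\<lambda>y. epow (g y) p) \<in> borel_measurable N"
  using measurable_compose[OF _ epow_borel] by blast

lemma epow_le_root:
  assumes "epow x p \<le> ennreal s" "0 < p"
  shows "x \<le> ennreal (max 0 s powr (1/p))"
proof -
  have "x \<noteq> \<infinity>" using assms(1) by (auto simp: top_unique)
  hence e: "ennreal (enn2real x powr p) \<le> ennreal s" using assms(1) unfolding epow_def by simp
  have "enn2real x powr p \<le> max 0 s"
    using e by (cases "0 \<le> s") (auto simp: ennreal_le_iff2)
  hence "(enn2real x powr p) powr (1/p) \<le> max 0 s powr (1/p)"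
    using assms(2) by (intro powr_mono2) auto
  hence "enn2real x \<le> max 0 s powr (1/p)" using assms(2) by (simp add: powr_powr)
  hence "ennreal (enn2real x) \<le> ennreal (max 0 s powr (1/p))" by (rule ennreal_leI)
  moreover have "ennreal (enn2real x) = x" using \<open>x \<noteq> \<infinity>\<close> by (simp add: less_top)
  ultimately show ?thesis by simp
qed

lemma epow_SUP_le:
  fixes a :: "nat \<Rightarrow> ennreal"
  assumes "0 < p"
  shows "epow (SUP n. a n) p \<le> (\<Sum>n. epow (a n) p)"
proof (cases "(\<Sum>n. epow (a n) p) = \<infinity>")
  case True thus ?thesis by simp
next
  case False
  define s where "s = enn2real (\<Sum>n. epow (a n) p)"
  have s: "(\<Sum>n. epow (a n) p) = ennreal s" "0 \<le> s"
    using False unfolding s_def by (auto simp: less_top)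
  have "epow (a n) p \<le> ennreal s" for n
  proof -
    have "sum (\<lambda>n. epow (a n) p) {n} \<le> (\<Sum>n. epow (a n) p)"
      by (rule sum_le_suminf) (auto intro: summableI)
    thus ?thesis using s by simp
  qed
  hence "a n \<le> ennreal (max 0 s powr (1/p))" for n using epow_le_root assms by blast
  hence "(SUP n. a n) \<le> ennreal (max 0 s powr (1/p))" by (rule SUP_least)
  hence "epow (SUP n. a n) p \<le> epow (ennreal (max 0 s powr (1/p))) p"
    using assms by (intro epow_mono) auto
  also have "\<dots> = ennreal s" using assms s(2) by (simp add: epow_fin powr_powr)
  finally show ?thesis using s by simp
qed

lemma mod_zero_iff:
  "p_modulus M p \<Gamma> = 0 \<longleftrightarrow> (\<forall>e>0. \<exists>\<rho>. \<rho> \<in> borel_measurable borel \<and>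
      (\<forall>(\<gamma>, l) \<in> \<Gamma>. 1 \<le> line_integral \<gamma> l \<rho>) \<and> (\<integral>\<^sup>+ y. epow (\<rho> y) p \<partial>M) < e)"
  unfolding p_modulus_def bot_ennreal[symmetric] INF_eq_bot_iff by (auto simp: bot_ennreal)

lemma mod_zero_mono:
  assumes "p_modulus M p \<Gamma> = 0"
    and "\<And>\<rho>. \<rho> \<in> borel_measurable borel \<Longrightarrow> (\<forall>(\<gamma>, l) \<in> \<Gamma>. 1 \<le> line_integral \<gamma> l \<rho>) \<Longrightarrow>
           (\<forall>(\<gamma>, l) \<in> \<Gamma>'. 1 \<le> line_integral \<gamma> l \<rho>)"
  shows "p_modulus M p \<Gamma>' = 0"
  using assms unfolding mod_zero_iff by meson

lemma mod_zero_subset: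
  "p_modulus M p \<Gamma> = 0 \<Longrightarrow> \<Gamma>' \<subseteq> \<Gamma> \<Longrightarrow> p_modulus M p \<Gamma>' = 0"
  by (erule mod_zero_mono) blast

lemma mod_empty: "0 < p \<Longrightarrow> p_modulus M p {} = 0"
  unfolding mod_zero_iff by (intro allI impI exI[of _ "\<lambda>_. 0"]) auto

lemma small_const:
  fixes I e :: ennreal
  assumes "I < \<infinity>" "0 < e"
  shows "\<exists>c::real. 0 < c \<and> c \<le> 1 \<and> ennreal c * I < e"
proof -
  obtain x where x: "0 < x" "x < e" using dense[OF assms(2)] by blast
  have "x < \<infinity>" using less_le_trans[OF x(2) top_greatest] by simp
  define d where "d = enn2real x"
  have d: "0 < d" "ennreal d < e" using x \<open>x < \<infinity>\<close> unfolding d_def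
    by (auto simp: enn2real_positive_iff less_top)
  define i where "i = enn2real I"
  have i: "I = ennreal i" "0 \<le> i" using assms(1) unfolding i_def by auto
  define c where "c = min 1 (d / (2 * (i + 1)))"
  have c0: "0 < c" using d i unfolding c_def by simp
  have "c * i \<le> (d / (2 * (i + 1))) * i" unfolding c_def using i by (intro mult_right_mono) auto
  also have "\<dots> < d"
  proof -
    have "d * i < d * (2 * (i + 1))" using d i by (intro mult_strict_left_mono) auto
    thus ?thesis using i by (simp add: field_simps)
  qed
  finally have "c * i < d" .
  hence "ennreal c * I < ennreal d" using i c0 d by (simp add: ennreal_mult[symmetric] ennreal_lessI)
  thus ?thesis using c0 d by (intro exI[of _ c]) (auto simp: c_def)
qed

lemma mod_inf_null:
  assumes M: "mms_standing M" and p: "1 \<le> p" and g: "g \<in> borel_measurable borel"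
    and fin: "(\<integral>\<^sup>+ y. epow (g y) p \<partial>M) < \<infinity>"
  shows "p_modulus M p {(\<gamma>, l). arclength_curve \<gamma> l \<and> line_integral \<gamma> l g = \<infinity>} = 0"
  unfolding mod_zero_iff
proof (intro allI impI)
  fix e :: ennreal assume e: "0 < e"
  obtain c where c: "0 < c" "c \<le> 1" "ennreal c * (\<integral>\<^sup>+ y. epow (g y) p \<partial>M) < e"
    using small_const[OF fin e] by blast
  define \<rho> where "\<rho> y = ennreal c * g y" for y
  have gM: "g \<in> borel_measurable M" using meas_M[OF M g] .
  have "(\<integral>\<^sup>+ y. epow (\<rho> y) p \<partial>M) = (\<integral>\<^sup>+ y. ennreal (c powr p) * epow (g y) p \<partial>M)"
    unfolding \<rho>_def using c p by (simp add: epow_cmult)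
  also have "\<dots> = ennreal (c powr p) * (\<integral>\<^sup>+ y. epow (g y) p \<partial>M)"
    by (rule nn_integral_cmult) (use gM in measurable)
  also have "\<dots> \<le> ennreal c * (\<integral>\<^sup>+ y. epow (g y) p \<partial>M)"
  proof (rule mult_right_mono)
    have "c powr p \<le> c powr 1" using c p by (intro powr_mono') auto
    thus "ennreal (c powr p) \<le> ennreal c" using c by (intro ennreal_leI) simp
  qed simp
  finally have int: "(\<integral>\<^sup>+ y. epow (\<rho> y) p \<partial>M) < e" using c(3) by simp
  have adm: "1 \<le> line_integral \<gamma> l \<rho>" if "arclength_curve \<gamma> l" "line_integral \<gamma> l g = \<infinity>" for \<gamma> l
  proof -
    have cont: "continuous_on {0..l} \<gamma>" "0 \<le> l" using that(1) unfolding arclength_curve_def by auto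
    have "line_integral \<gamma> l \<rho> = ennreal c * line_integral \<gamma> l g"
      unfolding line_integral_def \<rho>_def mult.assoc
      by (rule nn_integral_cmult) (use curve_meas[OF cont g, of 0 l] in simp)
    thus ?thesis using that(2) c by (simp add: ennreal_mult_top)
  qed
  show "\<exists>\<rho>. \<rho> \<in> borel_measurable borel \<and>
      (\<forall>(\<gamma>, l) \<in> {(\<gamma>, l). arclength_curve \<gamma> l \<and> line_integral \<gamma> l g = \<infinity>}. 1 \<le> line_integral \<gamma> l \<rho>) \<and>
      (\<integral>\<^sup>+ y. epow (\<rho> y) p \<partial>M) < e"
  proof -
    have "\<rho> \<in> borel_measurable borel" unfolding \<rho>_def using g by measurable
    moreover have "\<forall>(\<gamma>, l) \<in> {(\<gamma>, l). arclength_curve \<gamma> l \<and> line_integral \<gamma> l g = \<infinity>}. 1 \<le> line_integral \<gamma> l \<rho>"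
      using adm by blast
    ultimately show ?thesis using int by blast
  qed
qed



lemma exists_small_real:
  fixes e :: ennreal assumes "0 < e" shows "\<exists>d::real. 0 < d \<and> ennreal d < e"
proof -
  obtain x where x: "0 < x" "x < e" using dense[OF assms] by blast
  have "x < \<infinity>" using less_le_trans[OF x(2) top_greatest] by simp
  thus ?thesis using x by (intro exI[of _ "enn2real x"]) (auto simp: enn2real_positive_iff less_top)
qed

lemma mod_UN:
  fixes \<Gamma> :: "nat \<Rightarrow> ((real \<Rightarrow> 'a::metric_space) \<times> real) set"
  assumes M: "mms_standing M" and p: "1 \<le> p" and z: "\<And>n. p_modulus M p (\<Gamma> n) = 0"
  shows "p_modulus M p (\<Union>n. \<Gamma> n) = 0"
  unfolding mod_zero_iff
proof (intro allI impI)
  fix e :: ennreal assume e: "0 < e"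
  obtain d where d: "0 < d" "ennreal d < e" using exists_small_real[OF e] by blast
  have "\<forall>n. \<exists>\<rho>. \<rho> \<in> borel_measurable borel \<and> (\<forall>(\<gamma>, l) \<in> \<Gamma> n. 1 \<le> line_integral \<gamma> l \<rho>) \<and>
      (\<integral>\<^sup>+ y. epow (\<rho> y) p \<partial>M) < ennreal (d * (1/2)^Suc n)"
  proof
    fix n
    have "0 < ennreal (d * (1/2)^Suc n)" using d by simp
    thus "\<exists>\<rho>. \<rho> \<in> borel_measurable borel \<and> (\<forall>(\<gamma>, l) \<in> \<Gamma> n. 1 \<le> line_integral \<gamma> l \<rho>) \<and>
      (\<integral>\<^sup>+ y. epow (\<rho> y) p \<partial>M) < ennreal (d * (1/2)^Suc n)"
      using z[of n] unfolding mod_zero_iff by blast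
  qed
  then obtain R where R: "\<And>n. R n \<in> borel_measurable borel"
    "\<And>n. \<forall>(\<gamma>, l) \<in> \<Gamma> n. 1 \<le> line_integral \<gamma> l (R n)"
    "\<And>n. (\<integral>\<^sup>+ y. epow (R n y) p \<partial>M) < ennreal (d * (1/2)^Suc n)"
    by metis
  define \<rho> where "\<rho> y = (SUP n. R n y)" for y
  have \<rho>m: "\<rho> \<in> borel_measurable borel" unfolding \<rho>_def using R(1) by measurable
  have adm: "\<forall>(\<gamma>, l) \<in> (\<Union>n. \<Gamma> n). 1 \<le> line_integral \<gamma> l \<rho>"
  proof safe
    fix \<gamma> l n assume "(\<gamma>, l) \<in> \<Gamma> n"
    hence "1 \<le> line_integral \<gamma> l (R n)" using R(2) by blast
    also have "\<dots> \<le> line_integral \<gamma> l \<rho>" unfolding line_integral_def \<rho>_def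
      by (intro nn_integral_mono mult_right_mono) (auto intro: SUP_upper)
    finally show "1 \<le> line_integral \<gamma> l \<rho>" .
  qed
  have RM: "\<And>n. (\<lambda>y. epow (R n y) p) \<in> borel_measurable M" using meas_M[OF M R(1)] by measurable
  have "(\<integral>\<^sup>+ y. epow (\<rho> y) p \<partial>M) \<le> (\<integral>\<^sup>+ y. (\<Sum>n. epow (R n y) p) \<partial>M)"
    unfolding \<rho>_def by (intro nn_integral_mono epow_SUP_le) (use p in auto)
  also have "\<dots> = (\<Sum>n. \<integral>\<^sup>+ y. epow (R n y) p \<partial>M)" by (rule nn_integral_suminf[OF RM])
  also have "\<dots> \<le> (\<Sum>n. ennreal (d * (1/2)^Suc n))"
    by (intro suminf_le less_imp_le[OF R(3)]) (auto intro: summableI)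
  also have "\<dots> = ennreal d"
    using sums_mult[OF power_half_series, of d] d by (intro suminf_ennreal_eq) auto
  finally have "(\<integral>\<^sup>+ y. epow (\<rho> y) p \<partial>M) < e" using d(2) by simp
  thus "\<exists>\<rho>. \<rho> \<in> borel_measurable borel \<and> (\<forall>(\<gamma>, l) \<in> (\<Union>n. \<Gamma> n). 1 \<le> line_integral \<gamma> l \<rho>) \<and>
      (\<integral>\<^sup>+ y. epow (\<rho> y) p \<partial>M) < e" using \<rho>m adm by blast
qed

lemma mod_Un:
  assumes M: "mms_standing M" and p: "1 \<le> p" and "p_modulus M p A = 0" "p_modulus M p B = 0"
  shows "p_modulus M p (A \<union> B) = 0"
proof -
  have eq: "(\<Union>n. (if n = (0::nat) then A else B)) = A \<union> B" by (auto split: if_splits)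
  have H: "p_modulus M p (\<Union>n. (if n = (0::nat) then A else B)) = 0"
    by (rule mod_UN[OF M p]) (use assms in auto)
  show ?thesis using H[unfolded eq] .
qed

definition subfam :: "((real \<Rightarrow> 'a) \<times> real) set \<Rightarrow> ((real \<Rightarrow> 'a::metric_space) \<times> real) set" where
  "subfam \<Gamma> = {(\<gamma>, l). arclength_curve \<gamma> l \<and>
     (\<exists>a b. 0 \<le> a \<and> a < b \<and> b \<le> l \<and> ((\<lambda>t. \<gamma> (a + t)), b - a) \<in> \<Gamma>)}"

lemma mod_sub:
  assumes "p_modulus M p \<Gamma> = 0" shows "p_modulus M p (subfam \<Gamma>) = 0"
proof (rule mod_zero_mono[OF assms])
  fix \<rho> :: "'a \<Rightarrow> ennreal" assume \<rho>: "\<rho> \<in> borel_measurable borel" "\<forall>(\<gamma>, l) \<in> \<Gamma>. 1 \<le> line_integral \<gamma> l \<rho>"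
  show "\<forall>(\<gamma>, l) \<in> subfam \<Gamma>. 1 \<le> line_integral \<gamma> l \<rho>"
  proof (clarsimp simp: subfam_def)
    fix \<gamma> l a b assume ac: "arclength_curve \<gamma> l" and ab: "0 \<le> a" "a < b" "b \<le> l"
      and inG: "((\<lambda>t. \<gamma> (a + t)), b - a) \<in> \<Gamma>"
    have c: "continuous_on {0..l} \<gamma>" "0 \<le> l" using ac unfolding arclength_curve_def by auto
    have "1 \<le> line_integral (\<lambda>t. \<gamma> (a + t)) (b - a) \<rho>" using \<rho>(2) inG by blast
    also have "\<dots> \<le> line_integral \<gamma> l \<rho>" using line_integral_sub_le[OF c \<rho>(1)] ab by simp
    finally show "1 \<le> line_integral \<gamma> l \<rho>" .
  qed
qed

definition badfam :: "('a::metric_space \<Rightarrow> ereal) \<Rightarrow> ('a \<Rightarrow> ennreal) \<Rightarrow> ((real \<Rightarrow> 'a) \<times> real) set" where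
  "badfam u g = {(\<gamma>, l). arclength_curve \<gamma> l \<and> \<not> ug_ineq u g \<gamma> l}"

definition inffam :: "('a::metric_space \<Rightarrow> ennreal) \<Rightarrow> ((real \<Rightarrow> 'a) \<times> real) set" where
  "inffam g = {(\<gamma>, l). arclength_curve \<gamma> l \<and> line_integral \<gamma> l g = \<infinity>}"

lemma pwug_iff: "p_weak_ug M p u g \<longleftrightarrow> g \<in> borel_measurable borel \<and> p_modulus M p (badfam u g) = 0"
  unfolding p_weak_ug_def badfam_def ..

lemma pwug_min:
  assumes M: "mms_standing M" and p: "1 \<le> p"
    and w1: "p_weak_ug M p u g1" and w2: "p_weak_ug M p u g2"
    and e1: "(\<integral>\<^sup>+ y. epow (g1 y) p \<partial>M) < \<infinity>" and e2: "(\<integral>\<^sup>+ y. epow (g2 y) p \<partial>M) < \<infinity>"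
  shows "p_weak_ug M p u (\<lambda>y. min (g1 y) (g2 y))"
proof -
  have m1: "g1 \<in> borel_measurable borel" and z1: "p_modulus M p (badfam u g1) = 0"
    using w1 unfolding pwug_iff by auto
  have m2: "g2 \<in> borel_measurable borel" and z2: "p_modulus M p (badfam u g2) = 0"
    using w2 unfolding pwug_iff by auto
  have i1: "p_modulus M p (inffam g1) = 0" using mod_inf_null[OF M p m1 e1] unfolding inffam_def .
  have i2: "p_modulus M p (inffam g2) = 0" using mod_inf_null[OF M p m2 e2] unfolding inffam_def .
  have U: "p_modulus M p ((subfam (badfam u g1) \<union> subfam (badfam u g2)) \<union> (inffam g1 \<union> inffam g2)) = 0"
    by (intro mod_Un[OF M p] mod_sub z1 z2 i1 i2)
  have sub: "badfam u (\<lambda>y. min (g1 y) (g2 y)) \<subseteq>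
      (subfam (badfam u g1) \<union> subfam (badfam u g2)) \<union> (inffam g1 \<union> inffam g2)"
  proof
    fix x assume x: "x \<in> badfam u (\<lambda>y. min (g1 y) (g2 y))"
    obtain \<gamma> l where xe: "x = (\<gamma>, l)" by (cases x)
    have ac: "arclength_curve \<gamma> l" and nu: "\<not> ug_ineq u (\<lambda>y. min (g1 y) (g2 y)) \<gamma> l"
      using x xe unfolding badfam_def by auto
    show "x \<in> (subfam (badfam u g1) \<union> subfam (badfam u g2)) \<union> (inffam g1 \<union> inffam g2)"
    proof (rule ccontr)
      assume "x \<notin> (subfam (badfam u g1) \<union> subfam (badfam u g2)) \<union> (inffam g1 \<union> inffam g2)"
      hence n1: "(\<gamma>, l) \<notin> subfam (badfam u g1)" and n2: "(\<gamma>, l) \<notin> subfam (badfam u g2)"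
        and n3: "(\<gamma>, l) \<notin> inffam g1" and n4: "(\<gamma>, l) \<notin> inffam g2" using xe by auto
      have f1: "line_integral \<gamma> l g1 < \<infinity>" using n3 ac unfolding inffam_def by (auto simp: less_top)
      have f2: "line_integral \<gamma> l g2 < \<infinity>" using n4 ac unfolding inffam_def by (auto simp: less_top)
      have s1: "ug_ineq u g1 (\<lambda>t. \<gamma> (a + t)) (b - a)" if "0 \<le> a" "a < b" "b \<le> l" for a b
        using n1 that ac arclength_sub[OF ac that] unfolding subfam_def badfam_def by auto
      have s2: "ug_ineq u g2 (\<lambda>t. \<gamma> (a + t)) (b - a)" if "0 \<le> a" "a < b" "b \<le> l" for a b
        using n2 that ac arclength_sub[OF ac that] unfolding subfam_def badfam_def by auto
      have "ug_ineq u (\<lambda>y. min (g1 y) (g2 y)) \<gamma> l" by (rule curve_min[OF ac m1 m2 f1 f2 s1 s2])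
      thus False using nu by simp
    qed
  qed
  have "(\<lambda>y. min (g1 y) (g2 y)) \<in> borel_measurable borel" using m1 m2 by measurable
  thus ?thesis unfolding pwug_iff using mod_zero_subset[OF U sub] by simp
qed



primrec hmin :: "(nat \<Rightarrow> 'a \<Rightarrow> ennreal) \<Rightarrow> nat \<Rightarrow> 'a \<Rightarrow> ennreal" where
  "hmin gs 0 = gs 0"
| "hmin gs (Suc n) = (\<lambda>y. min (hmin gs n y) (gs (Suc n) y))"

lemma hmin_le: "hmin gs n y \<le> gs n y"
  by (cases n) auto

lemma hmin_dec: "hmin gs (Suc n) y \<le> hmin gs n y"
  by simp

lemma hmin_le0: "hmin gs n y \<le> gs 0 y"
  by (induct n) (auto intro: min.coboundedI1)

lemma ae_eq_of_int_eq:
  fixes f h :: "'a \<Rightarrow> ennreal"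
  assumes "f \<in> borel_measurable M" "h \<in> borel_measurable M" "\<And>y. f y \<le> h y"
    "integral\<^sup>N M h < \<infinity>" "integral\<^sup>N M f = integral\<^sup>N M h"
  shows "AE y in M. h y \<le> f y"
proof -
  have "(\<integral>\<^sup>+ y. h y - f y \<partial>M) = integral\<^sup>N M h - integral\<^sup>N M f"
    by (rule nn_integral_diff) (use assms in \<open>auto simp: less_top\<close>)
  also have "\<dots> = 0" using assms by (simp add: less_top)
  finally have "AE y in M. h y - f y = 0"
    by (subst nn_integral_0_iff_AE[symmetric]) (use assms in measurable)
  thus ?thesis by (auto elim: AE_mp intro: ennreal_minus_eq_0)
qed

lemma minimal_exists:
  assumes M: "mms_standing M" and p: "1 \<le> p" and u: "u \<in> newtonian M p"
  shows "\<exists>g. minimal_pwug M p u g"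
proof -
  define E where "E g = (\<integral>\<^sup>+ y. epow (g y) p \<partial>M)" for g :: "'a \<Rightarrow> ennreal"
  define G where "G = {g. p_weak_ug M p u g \<and> E g < \<infinity>}"
  have Gne: "G \<noteq> {}" using u unfolding newtonian_def G_def E_def by auto
  define I where "I = (INF g\<in>G. E g)"
  have IG: "I \<le> E g" if "g \<in> G" for g unfolding I_def using that by (rule INF_lower)
  have Ifin: "I < \<infinity>" using Gne IG G_def by (auto intro: le_less_trans)
  have Gmeas: "g \<in> borel_measurable borel" if "g \<in> G" for g
    using that unfolding G_def p_weak_ug_def by auto
  have EM: "(\<lambda>y. epow (g y) p) \<in> borel_measurable M" if "g \<in> borel_measurable borel" for g
    using meas_M[OF M that] by measurable
  have Emono: "E f \<le> E g" if "\<And>y. f y \<le> g y" for f g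
    unfolding E_def by (intro nn_integral_mono epow_mono) (use that p in auto)
  have Gmin: "(\<lambda>y. min (f y) (g y)) \<in> G" if "f \<in> G" "g \<in> G" for f g
  proof -
    have "p_weak_ug M p u (\<lambda>y. min (f y) (g y))"
      using pwug_min[OF M p, of u f g] that unfolding G_def E_def by auto
    moreover have "E (\<lambda>y. min (f y) (g y)) \<le> E g" by (rule Emono) simp
    ultimately show ?thesis using that unfolding G_def by auto
  qed
  have "\<forall>n. \<exists>g\<in>G. E g < I + ennreal (1 / Suc n)"
  proof
    fix n
    have "I < I + ennreal (1 / Suc n)" using Ifin by (simp add: ennreal_add_left_cancel_less less_top)
    thus "\<exists>g\<in>G. E g < I + ennreal (1 / Suc n)" unfolding I_def by (simp add: INF_less_iff)
  qed
  then obtain gs where gs: "\<And>n. gs n \<in> G" "\<And>n. E (gs n) < I + ennreal (1 / Suc n)" by metis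
  define h where "h = hmin gs"
  have hG: "h n \<in> G" for n unfolding h_def
    by (induct n) (auto intro: Gmin gs simp del: hmin.simps simp: hmin.simps(2)[abs_def] hmin.simps(1))
  define g0 where "g0 y = (INF n. h n y)" for y
  have hm: "h n \<in> borel_measurable borel" for n using Gmeas[OF hG] .
  have g0m: "g0 \<in> borel_measurable borel" unfolding g0_def using hm by measurable
  have g0le: "g0 y \<le> h n y" for y n unfolding g0_def by (rule INF_lower) simp
  have Eg0: "E g0 \<le> I"
  proof (rule ennreal_le_epsilon)
    fix e :: real assume e: "0 < e"
    obtain n where n: "1 / real (Suc n) < e" using e by (metis nat_approx_posE)
    have "E g0 \<le> E (h n)" by (rule Emono) (rule g0le)
    also have "\<dots> \<le> E (gs n)" by (rule Emono) (simp add: h_def hmin_le)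
    also have "\<dots> \<le> I + ennreal (1 / Suc n)" using gs(2)[of n] by simp
    also have "\<dots> \<le> I + ennreal e" using n by (intro add_left_mono ennreal_leI) simp
    finally show "E g0 \<le> I + ennreal e" .
  qed
  have Eg0f: "E g0 < \<infinity>" using Eg0 Ifin by simp
  have zh: "p_modulus M p (badfam u (h n)) = 0" for n using hG[of n] unfolding G_def pwug_iff by auto
  have zi: "p_modulus M p (inffam (h 0)) = 0"
    using mod_inf_null[OF M p hm[of 0]] hG[of 0] unfolding inffam_def G_def E_def by auto
  have U: "p_modulus M p ((\<Union>n. badfam u (h n)) \<union> inffam (h 0)) = 0"
    by (intro mod_Un[OF M p] mod_UN[OF M p] zh zi)
  have sub: "badfam u g0 \<subseteq> (\<Union>n. badfam u (h n)) \<union> inffam (h 0)"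
  proof
    fix x assume x: "x \<in> badfam u g0"
    obtain \<gamma> l where xe: "x = (\<gamma>, l)" by (cases x)
    have ac: "arclength_curve \<gamma> l" and nu: "\<not> ug_ineq u g0 \<gamma> l"
      using x xe unfolding badfam_def by auto
    have c: "continuous_on {0..l} \<gamma>" "0 \<le> l" using ac unfolding arclength_curve_def by auto
    show "x \<in> (\<Union>n. badfam u (h n)) \<union> inffam (h 0)"
    proof (rule ccontr)
      assume "x \<notin> (\<Union>n. badfam u (h n)) \<union> inffam (h 0)"
      hence ug: "\<And>n. ug_ineq u (h n) \<gamma> l" and fin0: "line_integral \<gamma> l (h 0) < \<infinity>"
        using xe ac unfolding badfam_def inffam_def by (auto simp: less_top)
      have LIle: "line_integral \<gamma> l (h n) \<le> line_integral \<gamma> l (h 0)" for n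
        unfolding line_integral_def h_def
        by (intro nn_integral_mono mult_right_mono) (auto simp: hmin_le0)
      have endp: "\<not> (\<bar>u (\<gamma> 0)\<bar> = \<infinity> \<or> \<bar>u (\<gamma> l)\<bar> = \<infinity>)"
        using ug[of 0] fin0 unfolding ug_ineq_def by (auto split: if_splits)
      define D where "D = ennreal (real_of_ereal \<bar>u (\<gamma> 0) - u (\<gamma> l)\<bar>)"
      have Dn: "D \<le> line_integral \<gamma> l (h n)" for n using ug[of n] endp unfolding ug_ineq_def D_def by simp
      have "line_integral \<gamma> l g0 = (\<integral>\<^sup>+ s. (INF n. h n (\<gamma> s) * indicator {0..l} s) \<partial>lborel)"
        unfolding line_integral_def g0_def
        by (intro nn_integral_cong) (auto simp: indicator_def)
      also have "\<dots> = (INF n. line_integral \<gamma> l (h n))"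
        unfolding line_integral_def
      proof (rule nn_integral_monotone_convergence_INF_AE')
        show "AE x in lborel. h (Suc i) (\<gamma> x) * indicator {0..l} x \<le> h i (\<gamma> x) * indicator {0..l} x" for i
          by (intro AE_I2 mult_right_mono) (auto simp: h_def)
        show "(\<lambda>x. h i (\<gamma> x) * indicator {0..l} x) \<in> borel_measurable lborel" for i
          using curve_meas[OF c hm[of i], of 0 l] by simp
        show "(\<integral>\<^sup>+ x. h 0 (\<gamma> x) * indicator {0..l} x \<partial>lborel) < \<infinity>"
          using fin0 unfolding line_integral_def .
      qed
      finally have "D \<le> line_integral \<gamma> l g0" using Dn by (simp add: le_INF_iff)
      hence "ug_ineq u g0 \<gamma> l" using endp unfolding ug_ineq_def D_def by simp
      thus False using nu by simp
    qed
  qed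
  have pg0: "p_weak_ug M p u g0" unfolding pwug_iff using g0m mod_zero_subset[OF U sub] by simp
  have g0G: "g0 \<in> G" using pg0 Eg0f unfolding G_def by simp
  have IE: "I \<le> E g0" using IG[OF g0G] .
  show ?thesis
  proof (intro exI[of _ g0])
    show "minimal_pwug M p u g0"
      unfolding minimal_pwug_def
    proof (intro conjI allI impI)
      show "p_weak_ug M p u g0" by (rule pg0)
      show "(\<integral>\<^sup>+ y. epow (g0 y) p \<partial>M) < \<infinity>" using Eg0f unfolding E_def .
      fix g' assume g': "p_weak_ug M p u g' \<and> (\<integral>\<^sup>+ y. epow (g' y) p \<partial>M) < \<infinity>"
      hence g'G: "g' \<in> G" unfolding G_def E_def by simp
      let ?m = "\<lambda>y. min (g0 y) (g' y)"
      have mG: "?m \<in> G" by (rule Gmin[OF g0G g'G])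
      have "E ?m \<le> E g0" by (rule Emono) simp
      moreover have "E g0 \<le> E ?m" using IG[OF mG] Eg0 by simp
      ultimately have eq: "E ?m = E g0" by simp
      have ae: "AE y in M. epow (g0 y) p \<le> epow (?m y) p"
      proof (rule ae_eq_of_int_eq)
        show "(\<lambda>y. epow (?m y) p) \<in> borel_measurable M" using EM Gmeas[OF mG] by blast
        show "(\<lambda>y. epow (g0 y) p) \<in> borel_measurable M" using EM g0m by blast
        show "epow (?m y) p \<le> epow (g0 y) p" for y using p by (intro epow_mono) auto
        show "integral\<^sup>N M (\<lambda>y. epow (g0 y) p) < \<infinity>" using Eg0f unfolding E_def .
        show "integral\<^sup>N M (\<lambda>y. epow (?m y) p) = integral\<^sup>N M (\<lambda>y. epow (g0 y) p)" using eq unfolding E_def .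
      qed
      show "AE y in M. g0 y \<le> g' y"
      proof (rule AE_mp[OF ae], intro AE_I2 impI)
        fix y assume le: "epow (g0 y) p \<le> epow (?m y) p"
        show "g0 y \<le> g' y"
        proof (rule ccontr)
          assume "\<not> g0 y \<le> g' y"
          hence "?m y < g0 y" by (simp add: min_def)
          hence "epow (?m y) p < epow (g0 y) p" using p by (intro epow_strict) auto
          thus False using le by simp
        qed
      qed
    qed
  qed
qed



lemma test_ug:
  fixes \<phi> :: "'a::metric_space \<Rightarrow> real" and \<gamma> :: "real \<Rightarrow> 'a"
  assumes L: "0 < L" and lip: "\<And>y z. \<bar>\<phi> y - \<phi> z\<bar> \<le> L * dist y z"
    and supp: "\<And>y. y \<notin> S \<Longrightarrow> \<phi> y = 0" and S: "open S" and ac: "arclength_curve \<gamma> l"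
  shows "ug_ineq (\<lambda>y. ereal (\<phi> y)) (\<lambda>y. ennreal L * indicator S y) \<gamma> l"
proof -
  have l: "0 < l" and c: "continuous_on {0..l} \<gamma>" using ac unfolding arclength_curve_def by auto
  define f where "f t = \<phi> (\<gamma> t)" for t
  have fl: "\<bar>f t' - f t\<bar> \<le> L * (t' - t)" if "0 \<le> t" "t \<le> t'" "t' \<le> l" for t t'
  proof -
    have "\<bar>f t' - f t\<bar> \<le> L * dist (\<gamma> t') (\<gamma> t)" unfolding f_def by (rule lip)
    also have "\<dots> \<le> L * (t' - t)" using arclength_dist[OF ac that] L by (simp add: dist_commute)
    finally show ?thesis .
  qed
  define LI where "LI = line_integral \<gamma> l (\<lambda>y. ennreal L * indicator S y)"
  have LIeq: "LI = (\<integral>\<^sup>+ t. ennreal L * (indicator S (\<gamma> t) * indicator {0..l} t) \<partial>lborel)"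
    unfolding LI_def line_integral_def by (simp add: mult.assoc)
  define Z where "Z = {0..l} \<inter> \<gamma> -` (- S)"
  have Zc: "closed Z" unfolding Z_def by (rule continuous_closed_preimage[OF c]) (use S in auto)
  have fZ: "f t = 0" if "t \<in> Z" for t using that supp unfolding Z_def f_def by auto
  have key: "\<bar>f 0 - f l\<bar> \<le> enn2real LI \<and> LI < \<infinity>"
  proof (cases "Z = {}")
    case True
    have "LI = (\<integral>\<^sup>+ t. ennreal L * indicator {0..l} t \<partial>lborel)"
      unfolding LIeq using True unfolding Z_def by (intro nn_integral_cong) (auto simp: indicator_def)
    also have "\<dots> = ennreal L * ennreal l" using l by (simp add: nn_integral_cmult)
    finally have "LI = ennreal (L * l)" using L l by (simp add: ennreal_mult)
    moreover have "\<bar>f 0 - f l\<bar> \<le> L * l" using fl[of 0 l] l by (simp add: abs_minus_commute)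
    ultimately show ?thesis using L l by simp
  next
    case False
    have bdd: "bdd_below Z" "bdd_above Z" unfolding Z_def by (auto intro: bdd_belowI bdd_aboveI)
    define a where "a = Inf Z"
    define b where "b = Sup Z"
    have aZ: "a \<in> Z" unfolding a_def using closed_contains_Inf[OF False bdd(1) Zc] .
    have bZ: "b \<in> Z" unfolding b_def using closed_contains_Sup[OF False bdd(2) Zc] .
    have abm: "a \<le> b" unfolding a_def b_def by (rule cInf_le_cSup[OF False bdd(2) bdd(1)])
    have ab: "0 \<le> a" "a \<le> b" "b \<le> l" using aZ bZ abm unfolding Z_def by auto
    have lowa: "\<gamma> t \<in> S" if "0 \<le> t" "t < a" for t
    proof (rule ccontr)
      assume "\<gamma> t \<notin> S"
      hence "t \<in> Z" using that ab unfolding Z_def by auto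
      hence "a \<le> t" unfolding a_def by (rule cInf_lower[OF _ bdd(1)])
      thus False using that by simp
    qed
    have upb: "\<gamma> t \<in> S" if "b < t" "t \<le> l" for t
    proof (rule ccontr)
      assume "\<gamma> t \<notin> S"
      hence "t \<in> Z" using that ab unfolding Z_def by auto
      hence "t \<le> b" unfolding b_def by (rule cSup_upper[OF _ bdd(2)])
      thus False using that by simp
    qed
    have "\<bar>f 0 - f l\<bar> \<le> \<bar>f a - f 0\<bar> + \<bar>f l - f b\<bar>" using fZ[OF aZ] fZ[OF bZ] by simp
    also have "\<dots> \<le> L * a + L * (l - b)"
      using fl[of 0 a] fl[of b l] ab by (intro add_mono) auto
    finally have fb: "\<bar>f 0 - f l\<bar> \<le> L * a + L * (l - b)" .
    have "(\<integral>\<^sup>+ t. ennreal L * (indicator {0..<a} t + indicator {b<..l} t) \<partial>lborel) \<le> LI"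
      unfolding LIeq
    proof (intro nn_integral_mono mult_left_mono)
      fix t :: real
      show "indicator {0..<a} t + indicator {b<..l} t \<le> (indicator S (\<gamma> t) * indicator {0..l} t :: ennreal)"
        using lowa[of t] upb[of t] ab by (auto simp: indicator_def)
    qed simp
    moreover have "(\<integral>\<^sup>+ t. ennreal L * (indicator {0..<a} t + indicator {b<..l} t) \<partial>lborel)
        = ennreal L * (ennreal a + ennreal (l - b))"
    proof -
      have "(\<integral>\<^sup>+ t. ennreal L * (indicator {0..<a} t + indicator {b<..l} t) \<partial>lborel)
         = ennreal L * (\<integral>\<^sup>+ t. (indicator {0..<a} t + indicator {b<..l} t) \<partial>lborel)"
        by (rule nn_integral_cmult) simp
      also have "(\<integral>\<^sup>+ t. (indicator {0..<a} t + indicator {b<..l} t) \<partial>lborel)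
         = (\<integral>\<^sup>+ t. indicator {0..<a} t \<partial>lborel) + (\<integral>\<^sup>+ t. indicator {b<..l} t \<partial>lborel)"
        by (rule nn_integral_add) auto
      also have "(\<integral>\<^sup>+ t. indicator {0..<a} t \<partial>lborel) = ennreal a"
        using ab by (subst nn_integral_indicator) auto
      also have "(\<integral>\<^sup>+ t. indicator {b<..l} t \<partial>lborel) = ennreal (l - b)"
        using ab by (subst nn_integral_indicator) auto
      finally show ?thesis .
    qed
    moreover have "ennreal L * (ennreal a + ennreal (l - b)) = ennreal (L * a + L * (l - b))"
    proof -
      have "ennreal a + ennreal (l - b) = ennreal (a + (l - b))" using ab by simp
      hence "ennreal L * (ennreal a + ennreal (l - b)) = ennreal (L * (a + (l - b)))"
        by (subst ennreal_mult) (use L ab in auto)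
      thus ?thesis by (simp add: distrib_left)
    qed
    ultimately have lo: "ennreal (L * a + L * (l - b)) \<le> LI" by simp
    have LIf: "LI < \<infinity>"
    proof -
      have "LI \<le> (\<integral>\<^sup>+ t. ennreal L * indicator {0..l} t \<partial>lborel)"
        unfolding LIeq by (intro nn_integral_mono mult_left_mono) (auto simp: indicator_def)
      also have "\<dots> = ennreal L * ennreal l" using l by (simp add: nn_integral_cmult)
      finally have "LI \<le> ennreal (L * l)" using L l by (simp add: ennreal_mult)
      thus ?thesis by (rule le_less_trans) simp
    qed
    have nn: "0 \<le> L * a + L * (l - b)" using ab L by simp
    have "enn2real (ennreal (L * a + L * (l - b))) \<le> enn2real LI"
      using lo LIf by (intro enn2real_mono) auto
    hence "L * a + L * (l - b) \<le> enn2real LI" using nn by simp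
    thus ?thesis using fb LIf by simp
  qed
  have "ennreal \<bar>f 0 - f l\<bar> \<le> LI"
  proof -
    have "ennreal \<bar>f 0 - f l\<bar> \<le> ennreal (enn2real LI)" using key by (intro ennreal_leI) simp
    also have "\<dots> = LI" using key by (simp add: less_top)
    finally show ?thesis .
  qed
  thus ?thesis unfolding ug_ineq_def LI_def f_def by simp
qed



lemma clamp_lip: "\<bar>min 1 (max 0 (\<alpha>::real)) - min 1 (max 0 \<beta>)\<bar> \<le> \<bar>\<alpha> - \<beta>\<bar>"
  by (auto simp: min_def max_def abs_if)

lemma epow_ind: "0 < p \<Longrightarrow> epow (indicator S y) p = indicator S y"
  by (auto simp: indicator_def)

lemma cap_bound:
  fixes M :: "'a::metric_space measure"
  assumes M: "mms_standing M" and p: "1 \<le> p" and r: "0 < r" and rs: "r < s" and sR: "s \<le> R"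
  shows "cap_p M p (ball x r) (ball x R) \<le> ennreal (measure M (ball x s) / (s - r) powr p)"
proof -
  define L where "L = 1 / (s - r)"
  have L: "0 < L" using rs unfolding L_def by simp
  define \<phi> where "\<phi> y = min 1 (max 0 (L * (s - dist x y)))" for y
  have lip: "\<bar>\<phi> y - \<phi> z\<bar> \<le> L * dist y z" for y z
  proof -
    have "\<bar>\<phi> y - \<phi> z\<bar> \<le> \<bar>L * (s - dist x y) - L * (s - dist x z)\<bar>" unfolding \<phi>_def by (rule clamp_lip)
    also have "\<dots> = L * \<bar>dist x z - dist x y\<bar>" using L by (simp add: abs_mult right_diff_distrib[symmetric])
    also have "\<bar>dist x z - dist x y\<bar> \<le> dist y z"
      using dist_triangle[of x z y] dist_triangle[of x y z] by (simp add: dist_commute abs_le_iff)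
    hence "L * \<bar>dist x z - dist x y\<bar> \<le> L * dist y z" using L by (intro mult_left_mono) auto
    finally show ?thesis .
  qed
  have supp: "\<phi> y = 0" if "y \<notin> ball x s" for y
  proof -
    have "s \<le> dist x y" using that by simp
    hence "L * (s - dist x y) \<le> 0" using L by (simp add: mult_nonneg_nonpos)
    thus ?thesis unfolding \<phi>_def by simp
  qed
  have one: "\<phi> y = 1" if "y \<in> ball x r" for y
  proof -
    have "dist x y < r" using that by simp
    hence "L * (s - r) \<le> L * (s - dist x y)" using L by (intro mult_left_mono) auto
    moreover have "L * (s - r) = 1" unfolding L_def using rs by simp
    ultimately show ?thesis unfolding \<phi>_def by simp
  qed
  have \<phi>01: "0 \<le> \<phi> y" "\<phi> y \<le> 1" for y unfolding \<phi>_def by auto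
  define u where "u y = ereal (\<phi> y)" for y
  define g where "g y = ennreal L * indicator (ball x s) y" for y
  have Mb: "sets borel \<subseteq> sets M" "space M = UNIV" using M unfolding mms_standing_def by auto
  have ballM: "ball x s \<in> sets M" using Mb by auto
  have fin: "emeasure M (ball x s) < \<infinity>" using M rs r unfolding mms_standing_def by auto
  have bb[measurable]: "ball x s \<in> sets borel" by simp
  have gm: "g \<in> borel_measurable borel" unfolding g_def by measurable
  have \<phi>c: "continuous_on UNIV \<phi>" unfolding \<phi>_def by (intro continuous_intros)
  have um: "u \<in> borel_measurable M" unfolding u_def
    using meas_M[OF M borel_measurable_continuous_onI[OF \<phi>c]] by measurable
  have ug: "ug_ineq u g \<gamma> l" if "arclength_curve \<gamma> l" for \<gamma> l
    unfolding u_def g_def by (rule test_ug[OF L lip supp _ that]) auto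
  have bad: "badfam u g = {}" unfolding badfam_def using ug by auto
  have pw: "p_weak_ug M p u g" unfolding pwug_iff using gm bad mod_empty[of p M] p by simp
  have Eg: "(\<integral>\<^sup>+ y. epow (g y) p \<partial>M) = ennreal (L powr p) * emeasure M (ball x s)"
  proof -
    have "(\<integral>\<^sup>+ y. epow (g y) p \<partial>M) = (\<integral>\<^sup>+ y. ennreal (L powr p) * indicator (ball x s) y \<partial>M)"
      unfolding g_def using L p by (intro nn_integral_cong) (simp add: epow_cmult epow_ind)
    also have "\<dots> = ennreal (L powr p) * emeasure M (ball x s)"
      by (rule nn_integral_cmult_indicator[OF ballM])
    finally show ?thesis .
  qed
  have Egf: "(\<integral>\<^sup>+ y. epow (g y) p \<partial>M) < \<infinity>"
    unfolding Eg using fin by (simp add: ennreal_mult_less_top)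
  have Eu: "(\<integral>\<^sup>+ y. epow (e2ennreal \<bar>u y\<bar>) p \<partial>M) < \<infinity>"
  proof -
    have "(\<integral>\<^sup>+ y. epow (e2ennreal \<bar>u y\<bar>) p \<partial>M) \<le> (\<integral>\<^sup>+ y. indicator (ball x s) y \<partial>M)"
    proof (rule nn_integral_mono)
      fix y
      have e: "e2ennreal \<bar>u y\<bar> = ennreal (\<phi> y)" unfolding u_def using \<phi>01[of y] by simp
      show "epow (e2ennreal \<bar>u y\<bar>) p \<le> indicator (ball x s) y"
      proof (cases "y \<in> ball x s")
        case True
        have "\<phi> y powr p \<le> 1" using \<phi>01[of y] p by (intro powr_le1) auto
        thus ?thesis using True e \<phi>01[of y] by (simp add: epow_fin)
      next
        case False
        thus ?thesis using e supp[OF False] p by simp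
      qed
    qed
    also have "\<dots> = emeasure M (ball x s)" using ballM by simp
    finally show ?thesis using fin by simp
  qed
  have uN: "u \<in> newtonian M p" unfolding newtonian_def using um Eu pw Egf by blast
  have u0: "\<forall>y. y \<notin> ball x R \<longrightarrow> u y = 0"
    using supp sR unfolding u_def by (auto simp: subset_iff)
  have u1: "\<forall>y\<in>ball x r. 1 \<le> u y" using one unfolding u_def by simp
  define gmin where "gmin = (SOME g. minimal_pwug M p u g)"
  have mp: "minimal_pwug M p u gmin" unfolding gmin_def using minimal_exists[OF M p uN] by (rule someI_ex)
  have ae: "AE y in M. gmin y \<le> g y" using mp pw Egf unfolding minimal_pwug_def by blast
  have "cap_p M p (ball x r) (ball x R) \<le> (\<integral>\<^sup>+ y. epow (gmin y) p * indicator (ball x R) y \<partial>M)"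
    unfolding cap_p_def gmin_def by (rule INF_lower) (use uN u0 u1 in blast)
  also have "\<dots> \<le> (\<integral>\<^sup>+ y. epow (g y) p \<partial>M)"
  proof (rule nn_integral_mono_AE)
    show "AE y in M. epow (gmin y) p * indicator (ball x R) y \<le> epow (g y) p"
    proof (rule AE_mp[OF ae], intro AE_I2 impI)
      fix y assume "gmin y \<le> g y"
      hence "epow (gmin y) p \<le> epow (g y) p" using p by (intro epow_mono) auto
      thus "epow (gmin y) p * indicator (ball x R) y \<le> epow (g y) p"
        by (auto simp: indicator_def)
    qed
  qed
  also have "\<dots> = ennreal (L powr p) * ennreal (measure M (ball x s))"
    unfolding Eg using fin by (simp add: emeasure_eq_ennreal_measure less_top)
  also have "\<dots> = ennreal (measure M (ball x s) / (s - r) powr p)"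
    unfolding L_def using rs by (simp add: ennreal_mult[symmetric] powr_divide divide_simps)
  finally show ?thesis .
qed



lemma mu_pos:
  assumes M: "mms_standing M" and t: "0 < t"
  shows "0 < measure M (ball x t)"
proof -
  have "0 < emeasure M (ball x t)" "emeasure M (ball x t) < \<infinity>" using M t unfolding mms_standing_def by auto
  thus ?thesis unfolding measure_def by (simp add: enn2real_positive_iff)
qed

lemma mu_mono:
  assumes M: "mms_standing M" and r: "0 < r" "r \<le> R"
  shows "measure M (ball x r) \<le> measure M (ball x R)"
proof -
  have s: "ball x R \<in> sets M" using M unfolding mms_standing_def by auto
  have "emeasure M (ball x r) \<le> emeasure M (ball x R)" using r by (intro emeasure_mono[OF _ s]) auto
  moreover have "emeasure M (ball x R) < \<infinity>" using M r unfolding mms_standing_def by auto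
  ultimately show ?thesis unfolding measure_def by (intro enn2real_mono) auto
qed

lemma ln_powr_bound:
  assumes a: "0 \<le> a" and b: "0 < b"
  shows "\<exists>K>0. \<forall>t::real. 1 \<le> t \<longrightarrow> ln t powr a \<le> K * t powr b"
proof (cases "a = 0")
  case True
  show ?thesis
  proof (intro exI[of _ 1] conjI allI impI)
    fix t :: real assume t: "1 \<le> t"
    have "ln t powr a \<le> 1" using True by simp
    also have "1 \<le> t powr b" using t b by (simp add: ge_one_powr_ge_zero)
    finally show "ln t powr a \<le> 1 * t powr b" by simp
  qed simp
next
  case False
  hence a': "0 < a" using a by simp
  define e where "e = b / a"
  have e: "0 < e" unfolding e_def using a' b by simp
  show ?thesis
  proof (intro exI[of _ "e powr (-a)"] conjI allI impI)
    show "0 < e powr (-a)" using e by simp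
    fix t :: real assume t: "1 \<le> t"
    have lt0: "0 \<le> ln t" using t by simp
    have "e * ln t = ln (t powr e)" using t by (simp add: ln_powr)
    also have "\<dots> \<le> t powr e - 1" using t by (intro ln_le_minus_one) simp
    also have "\<dots> \<le> t powr e" by simp
    finally have "ln t \<le> t powr e / e" using e by (simp add: field_simps)
    hence "ln t powr a \<le> (t powr e / e) powr a" using lt0 a by (intro powr_mono2) auto
    also have "\<dots> = t powr (e * a) / e powr a" using e t by (simp add: powr_divide powr_powr)
    also have "e * a = b" unfolding e_def using a' by simp
    finally show "ln t powr a \<le> e powr (- a) * t powr b" using e by (simp add: powr_minus divide_inverse mult.commute)
  qed
qed

lemma lowerlog:
  assumes a: "0 \<le> a" and q: "q < p"
  shows "\<exists>K>0. \<forall>t::real. 1 \<le> t \<longrightarrow> (1/t) powr p * ln t powr a \<le> K * (1/t) powr q"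
proof -
  obtain K where K: "0 < K" "\<And>t. 1 \<le> t \<Longrightarrow> ln t powr a \<le> K * t powr (p - q)"
    using ln_powr_bound[OF a, of "p - q"] q by auto
  show ?thesis
  proof (intro exI[of _ K] conjI allI impI)
    fix t :: real assume t: "1 \<le> t"
    have "(1/t) powr p * ln t powr a \<le> (1/t) powr p * (K * t powr (p - q))"
      using K(2)[OF t] by (intro mult_left_mono) auto
    also have "\<dots> = K * ((1/t) powr p * t powr (p - q))" by simp
    also have "(1/t) powr p * t powr (p - q) = (1/t) powr q"
      using t by (simp add: powr_divide powr_diff field_simps)
    finally show "(1/t) powr p * ln t powr a \<le> K * (1/t) powr q" .
  qed (use K in simp)
qed

lemma upperlog:
  assumes a: "0 \<le> a" and q: "p < q"
  shows "\<exists>c>0. \<forall>t::real. 1 < t \<longrightarrow> c * (1/t) powr q \<le> (1/t) powr p * ln t powr (- a)"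
proof -
  obtain K where K: "0 < K" "\<And>t. 1 \<le> t \<Longrightarrow> ln t powr a \<le> K * t powr (q - p)"
    using ln_powr_bound[OF a, of "q - p"] q by auto
  show ?thesis
  proof (intro exI[of _ "1/K"] conjI allI impI)
    fix t :: real assume t: "1 < t"
    have lt: "0 < ln t" using t by simp
    have la: "0 < ln t powr a" using lt by simp
    have "1/K * (1/t) powr q = (1/t) powr p / (K * t powr (q - p))"
      using t K by (simp add: powr_divide powr_diff field_simps)
    also have "\<dots> \<le> (1/t) powr p / ln t powr a"
      using K(2)[of t] t la K(1) by (intro divide_left_mono) (auto intro!: mult_pos_pos)
    also have "\<dots> = (1/t) powr p * ln t powr (- a)" using lt by (simp add: powr_minus divide_inverse)
    finally show "1/K * (1/t) powr q \<le> (1/t) powr p * ln t powr (- a)" .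
  qed (use K in simp)
qed



lemma lowerQ_of:
  assumes M: "mms_standing M" and q: "0 < q" and K: "0 < K"
    and H: "\<And>r R. 0 < r \<Longrightarrow> 2 * r \<le> R \<Longrightarrow>
       measure M (ball x r) / measure M (ball x R) \<le> K * (r / R) powr q"
  shows "q \<in> lowerQ M x"
proof -
  define C where "C = max K (2 powr q)"
  have C: "0 < C" unfolding C_def using K by simp
  have all: "measure M (ball x r) / measure M (ball x R) \<le> C * (r / R) powr q"
    if r: "0 < r" "r < R" for r R
  proof (cases "2 * r \<le> R")
    case True
    have "K * (r / R) powr q \<le> C * (r / R) powr q" unfolding C_def by (intro mult_right_mono) auto
    thus ?thesis using H[OF r(1) True] by simp
  next
    case False
    have pR: "0 < measure M (ball x R)" using mu_pos[OF M] r by simp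
    have "measure M (ball x r) \<le> measure M (ball x R)" using mu_mono[OF M] r by simp
    hence "measure M (ball x r) / measure M (ball x R) \<le> 1" using pR by simp
    also have "1 = 2 powr q * (1/2) powr q" by (simp add: powr_mult[symmetric])
    also have "\<dots> \<le> C * (r / R) powr q"
    proof (intro mult_mono)
      show "2 powr q \<le> C" unfolding C_def by simp
      show "(1/2) powr q \<le> (r / R) powr q" using False r q by (intro powr_mono2) (auto simp: field_simps)
    qed (use C in auto)
    finally show ?thesis .
  qed
  have "q \<in> lowerQ0 M x" unfolding lowerQ0_def using q C all by auto
  moreover have "q \<in> lowerQinf M x" unfolding lowerQinf_def using q C all by force
  ultimately show ?thesis unfolding lowerQ_def by auto
qed

lemma upperQ_of:
  assumes M: "mms_standing M" and q: "0 < q" and c: "0 < c" and D: "0 < D"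
    and dbl: "\<And>t. 0 < t \<Longrightarrow> measure M (ball x (2 * t)) \<le> D * measure M (ball x t)"
    and H: "\<And>r R. 0 < r \<Longrightarrow> 2 * r \<le> R \<Longrightarrow>
       c * (r / R) powr q \<le> measure M (ball x r) / measure M (ball x R)"
  shows "q \<in> upperQ M x"
proof -
  define C where "C = min c (1 / D)"
  have C: "0 < C" unfolding C_def using c D by simp
  have all: "C * (r / R) powr q \<le> measure M (ball x r) / measure M (ball x R)"
    if r: "0 < r" "r < R" for r R
  proof (cases "2 * r \<le> R")
    case True
    have "C * (r / R) powr q \<le> c * (r / R) powr q" unfolding C_def by (intro mult_right_mono) auto
    thus ?thesis using H[OF r(1) True] by simp
  next
    case False
    have pR: "0 < measure M (ball x R)" using mu_pos[OF M] r by simp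
    have pr: "0 < measure M (ball x r)" using mu_pos[OF M] r by simp
    have "measure M (ball x R) \<le> measure M (ball x (2 * r))" using mu_mono[OF M] r False by simp
    also have "\<dots> \<le> D * measure M (ball x r)" using dbl r by simp
    finally have le: "measure M (ball x R) \<le> D * measure M (ball x r)" .
    have "C * (r / R) powr q \<le> (1 / D) * 1"
    proof (intro mult_mono)
      show "C \<le> 1 / D" unfolding C_def by simp
      show "(r / R) powr q \<le> 1" using r q by (intro powr_le1) auto
    qed (use D in auto)
    also have "\<dots> \<le> measure M (ball x r) / measure M (ball x R)"
      using le pR D by (simp add: field_simps)
    finally show ?thesis .
  qed
  have "q \<in> upperQ0 M x" unfolding upperQ0_def using q C all by auto
  moreover have "q \<in> upperQinf M x" unfolding upperQinf_def using q C all by force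
  ultimately show ?thesis unfolding upperQ_def by auto
qed

lemma lower_case:
  assumes M: "mms_standing M" and q: "0 < q" and C: "0 < C" and K: "0 < K"
    and cap: "\<And>r R. 0 < r \<Longrightarrow> 2 * r \<le> R \<Longrightarrow>
       C * measure M (ball x r) * \<Phi> r R \<le> 2 powr p * measure M (ball x R) / R powr p"
    and pos: "\<And>r R. 0 < r \<Longrightarrow> 2 * r \<le> R \<Longrightarrow> 0 < \<Phi> r R"
    and bnd: "\<And>r R. 0 < r \<Longrightarrow> 2 * r \<le> R \<Longrightarrow> 1 / (R powr p * \<Phi> r R) \<le> K * (r / R) powr q"
  shows "q \<in> lowerQ M x"
proof (rule lowerQ_of[OF M q, of "2 powr p * K / C"])
  show "0 < 2 powr p * K / C" using K C by simp
  fix r R :: real assume r: "0 < r" "2 * r \<le> R"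
  have R: "0 < R" using r by simp
  have pR: "0 < measure M (ball x R)" and pr: "0 < measure M (ball x r)" using mu_pos[OF M] r R by auto
  have P: "0 < \<Phi> r R" using pos r by simp
  have Rp: "0 < R powr p" using R by simp
  have c: "C * measure M (ball x r) * \<Phi> r R * R powr p \<le> 2 powr p * measure M (ball x R)"
    using cap[OF r] Rp by (simp add: field_simps)
  have "measure M (ball x r) / measure M (ball x R) \<le> (2 powr p / C) * (1 / (R powr p * \<Phi> r R))"
    using c pR P Rp C by (simp add: field_simps)
  also have "\<dots> \<le> (2 powr p / C) * (K * (r / R) powr q)"
    using bnd[OF r] C by (intro mult_left_mono) auto
  finally show "measure M (ball x r) / measure M (ball x R) \<le> 2 powr p * K / C * (r / R) powr q"
    by simp
qed

lemma upper_case: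
  assumes M: "mms_standing M" and q: "0 < q" and C: "0 < C" and c: "0 < c" and D: "0 < D"
    and dbl: "\<And>t. 0 < t \<Longrightarrow> measure M (ball x (2 * t)) \<le> D * measure M (ball x t)"
    and cap: "\<And>r R. 0 < r \<Longrightarrow> 2 * r \<le> R \<Longrightarrow>
       C * measure M (ball x R) * \<Psi> r R \<le> D * measure M (ball x r) / r powr p"
    and bnd: "\<And>r R. 0 < r \<Longrightarrow> 2 * r \<le> R \<Longrightarrow> c * (r / R) powr q \<le> r powr p * \<Psi> r R"
  shows "q \<in> upperQ M x"
proof (rule upperQ_of[OF M q _ D dbl, of "C * c / D"])
  show "0 < C * c / D" using C c D by simp
  fix r R :: real assume r: "0 < r" "2 * r \<le> R"
  have R: "0 < R" using r by simp
  have pR: "0 < measure M (ball x R)" and pr: "0 < measure M (ball x r)" using mu_pos[OF M] r R by auto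
  have rp: "0 < r powr p" using r by simp
  have "C * c / D * (r / R) powr q \<le> (C / D) * (r powr p * \<Psi> r R)"
    using bnd[OF r] C D by (simp add: field_simps)
  also have "\<dots> \<le> measure M (ball x r) / measure M (ball x R)"
    using cap[OF r] pR rp D by (simp add: field_simps)
  finally show "C * c / D * (r / R) powr q \<le> measure M (ball x r) / measure M (ball x R)" .
qed



lemma sup_ge:
  assumes p: "0 < p" and S: "\<And>q. 0 < q \<Longrightarrow> q < p \<Longrightarrow> q \<in> S"
  shows "ereal p \<le> (SUP q\<in>S. ereal q)"
proof (rule ccontr)
  assume "\<not> ereal p \<le> (SUP q\<in>S. ereal q)"
  hence lt: "(SUP q\<in>S. ereal q) < ereal p" by simp
  have h: "ereal (p/2) \<le> (SUP q\<in>S. ereal q)" using S[of "p/2"] p by (intro SUP_upper) auto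
  obtain w where w: "(SUP q\<in>S. ereal q) < w" "w < ereal p" using dense[OF lt] by blast
  have "ereal (p/2) < w" using h w by simp
  then obtain q where q: "w = ereal q" using w by (cases w) auto
  have "ereal (p/2) < ereal q" using h w q by (metis order.strict_trans1)
  hence "p/2 < q" by simp
  moreover have "q < p" using q w by auto
  ultimately have "q \<in> S" using S p by simp
  hence "ereal q \<le> (SUP q\<in>S. ereal q)" by (intro SUP_upper)
  thus False using w q by simp
qed

lemma inf_le:
  assumes S: "\<And>q. p < q \<Longrightarrow> q \<in> S"
  shows "(INF q\<in>S. ereal q) \<le> ereal p"
proof (rule ccontr)
  assume "\<not> (INF q\<in>S. ereal q) \<le> ereal p"
  hence lt: "ereal p < (INF q\<in>S. ereal q)" by simp
  have h: "(INF q\<in>S. ereal q) \<le> ereal (p + 1)" using S[of "p+1"] by (intro INF_lower) auto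
  obtain w where w: "ereal p < w" "w < (INF q\<in>S. ereal q)" using dense[OF lt] by blast
  have "w < ereal (p + 1)" using h w by simp
  then obtain q where q: "w = ereal q" using w by (cases w) auto
  have "p < q" using q w by auto
  hence "q \<in> S" using S by simp
  hence "(INF q\<in>S. ereal q) \<le> ereal q" by (intro INF_lower)
  thus False using w q by simp
qed

lemma ennreal_sandwich: "ennreal a \<le> c \<Longrightarrow> c \<le> ennreal b \<Longrightarrow> 0 \<le> b \<Longrightarrow> a \<le> b"
  using order_trans ennreal_le_iff by metis

context
  fixes M :: "'a::metric_space measure" and p :: real and x :: 'a and D :: real
  assumes M: "mms_standing M" and p: "1 \<le> p" and D: "0 < D"
    and dbl: "\<And>t. 0 < t \<Longrightarrow> measure M (ball x (2 * t)) \<le> D * measure M (ball x t)"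
begin

lemma capU1:
  assumes r: "0 < r" "2 * r \<le> R"
  shows "cap_p M p (ball x r) (ball x R) \<le> ennreal (2 powr p * measure M (ball x R) / R powr p)"
proof -
  have R: "0 < R" "r < R" using r by auto
  have "cap_p M p (ball x r) (ball x R) \<le> ennreal (measure M (ball x R) / (R - r) powr p)"
    using cap_bound[OF M p r(1) R(2)] by simp
  also have "measure M (ball x R) / (R - r) powr p \<le> 2 powr p * measure M (ball x R) / R powr p"
  proof -
    have m: "0 \<le> measure M (ball x R)" by simp
    have "(R / 2) powr p \<le> (R - r) powr p" using r p by (intro powr_mono2) auto
    moreover have "(R / 2) powr p = R powr p / 2 powr p" using R by (simp add: powr_divide)
    ultimately have "R powr p / 2 powr p \<le> (R - r) powr p" by simp
    hence "measure M (ball x R) / (R - r) powr p \<le> measure M (ball x R) / (R powr p / 2 powr p)"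
      using m R by (intro divide_left_mono) auto
    thus ?thesis by (simp add: mult.commute)
  qed
  hence "ennreal (measure M (ball x R) / (R - r) powr p) \<le> ennreal (2 powr p * measure M (ball x R) / R powr p)"
    by (rule ennreal_leI)
  finally show ?thesis .
qed

lemma capU2:
  assumes r: "0 < r" "2 * r \<le> R"
  shows "cap_p M p (ball x r) (ball x R) \<le> ennreal (D * measure M (ball x r) / r powr p)"
proof -
  have "cap_p M p (ball x r) (ball x R) \<le> ennreal (measure M (ball x (2 * r)) / (2 * r - r) powr p)"
    using cap_bound[OF M p r(1), of "2 * r" R] r by simp
  also have "measure M (ball x (2 * r)) / (2 * r - r) powr p \<le> D * measure M (ball x r) / r powr p"
    using dbl[OF r(1)] r by (simp add: divide_right_mono)
  hence "ennreal (measure M (ball x (2 * r)) / (2 * r - r) powr p) \<le> ennreal (D * measure M (ball x r) / r powr p)"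
    by (rule ennreal_leI)
  finally show ?thesis .
qed

lemma real1:
  assumes r: "0 < r" "2 * r \<le> R" and h: "ennreal a \<le> cap_p M p (ball x r) (ball x R)"
  shows "a \<le> 2 powr p * measure M (ball x R) / R powr p"
  using ennreal_sandwich[OF h capU1[OF r]] by simp

lemma real2:
  assumes r: "0 < r" "2 * r \<le> R" and h: "ennreal a \<le> cap_p M p (ball x r) (ball x R)"
  shows "a \<le> D * measure M (ball x r) / r powr p"
  using ennreal_sandwich[OF h capU2[OF r]] D by simp

end



context
  fixes M :: "'a::metric_space measure" and p :: real and x :: 'a and D :: real
  assumes M: "mms_standing M" and p: "1 \<le> p" and D: "0 < D"
    and dbl: "\<And>t. 0 < t \<Longrightarrow> measure M (ball x (2 * t)) \<le> D * measure M (ball x t)"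
begin

lemma part_a:
  assumes "\<exists>C>0. \<forall>r R. 0 < 2 * r \<and> 2 * r \<le> R \<longrightarrow>
        ennreal (C * measure M (ball x r) / r powr p) \<le> cap_p M p (ball x r) (ball x R)"
  shows "p \<in> lowerQ M x"
proof -
  obtain C where C: "0 < C" and h: "\<And>r R. 0 < 2 * r \<Longrightarrow> 2 * r \<le> R \<Longrightarrow>
        ennreal (C * measure M (ball x r) / r powr p) \<le> cap_p M p (ball x r) (ball x R)"
    using assms by blast
  show ?thesis
  proof (rule lower_case[OF M _ C, where K=1 and p=p and \<Phi>="\<lambda>r R. 1 / r powr p"])
    fix r R :: real assume r: "0 < r" "2 * r \<le> R"
    show "C * measure M (ball x r) * (1 / r powr p) \<le> 2 powr p * measure M (ball x R) / R powr p"
      using real1[OF M p D dbl r h] r by simp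
    show "0 < 1 / r powr p" using r by simp
    show "1 / (R powr p * (1 / r powr p)) \<le> 1 * (r / R) powr p"
      using r by (simp add: powr_divide)
  qed (use p in auto)
qed

lemma part_b:
  assumes "\<exists>C>0. \<forall>r R. 0 < 2 * r \<and> 2 * r \<le> R \<longrightarrow>
        ennreal (C * measure M (ball x R) / R powr p) \<le> cap_p M p (ball x r) (ball x R)"
  shows "p \<in> upperQ M x"
proof -
  obtain C where C: "0 < C" and h: "\<And>r R. 0 < 2 * r \<Longrightarrow> 2 * r \<le> R \<Longrightarrow>
        ennreal (C * measure M (ball x R) / R powr p) \<le> cap_p M p (ball x r) (ball x R)"
    using assms by blast
  show ?thesis
  proof (rule upper_case[OF M _ C _ D dbl, where c=1 and p=p and \<Psi>="\<lambda>r R. 1 / R powr p"])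
    fix r R :: real assume r: "0 < r" "2 * r \<le> R"
    show "C * measure M (ball x R) * (1 / R powr p) \<le> D * measure M (ball x r) / r powr p"
      using real2[OF M p D dbl r h] r by simp
    show "1 * (r / R) powr p \<le> r powr p * (1 / R powr p)"
      using r by (simp add: powr_divide)
  qed (use p in auto)
qed

lemma part_c:
  assumes a: "0 \<le> a" and a': "a \<le> p"
    and "\<exists>C>0. \<forall>r R. 0 < 2 * r \<and> 2 * r \<le> R \<longrightarrow>
        ennreal (C * measure M (ball x r) / r powr p * ln (R / r) powr (- a))
          \<le> cap_p M p (ball x r) (ball x R)"
  shows "ereal p \<le> (SUP q \<in> lowerQ M x. ereal q)"
proof (rule sup_ge)
  show "0 < p" using p by simp
  fix q assume q: "0 < q" "q < p"
  obtain C where C: "0 < C" and h: "\<And>r R. 0 < 2 * r \<Longrightarrow> 2 * r \<le> R \<Longrightarrow>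
        ennreal (C * measure M (ball x r) / r powr p * ln (R / r) powr (- a)) \<le> cap_p M p (ball x r) (ball x R)"
    using assms by blast
  obtain K where K: "0 < K" "\<And>t. 1 \<le> t \<Longrightarrow> (1/t) powr p * ln t powr a \<le> K * (1/t) powr q"
    using lowerlog[OF a q(2)] by blast
  show "q \<in> lowerQ M x"
  proof (rule lower_case[OF M q(1) C K(1), where p=p and \<Phi>="\<lambda>r R. ln (R / r) powr (- a) / r powr p"])
    fix r R :: real assume r: "0 < r" "2 * r \<le> R"
    show "C * measure M (ball x r) * (ln (R / r) powr (- a) / r powr p) \<le> 2 powr p * measure M (ball x R) / R powr p"
      using real1[OF M p D dbl r h] r by simp
    have t: "1 < R / r" using r by (simp add: field_simps)
    hence lt: "0 < ln (R / r)" by simp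
    show "0 < ln (R / r) powr (- a) / r powr p" using lt r by simp
    have e1: "1 / (R powr p * (ln (R / r) powr (- a) / r powr p)) = (1 / (R / r)) powr p * ln (R / r) powr a"
      using r lt by (simp add: powr_divide powr_minus divide_simps)
    have e2: "1 / (R / r) = r / R" by simp
    show "1 / (R powr p * (ln (R / r) powr (- a) / r powr p)) \<le> K * (r / R) powr q"
      using K(2)[of "R / r"] t unfolding e1 e2 by simp
  qed
qed

lemma part_d:
  assumes a: "0 \<le> a" and a': "a \<le> p"
    and "\<exists>C>0. \<forall>r R. 0 < 2 * r \<and> 2 * r \<le> R \<longrightarrow>
        ennreal (C * measure M (ball x R) / R powr p * ln (R / r) powr (- a))
          \<le> cap_p M p (ball x r) (ball x R)"
  shows "(INF q \<in> upperQ M x. ereal q) \<le> ereal p"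
proof (rule inf_le)
  fix q assume q: "p < q"
  have q0: "0 < q" using q p by simp
  obtain C where C: "0 < C" and h: "\<And>r R. 0 < 2 * r \<Longrightarrow> 2 * r \<le> R \<Longrightarrow>
        ennreal (C * measure M (ball x R) / R powr p * ln (R / r) powr (- a)) \<le> cap_p M p (ball x r) (ball x R)"
    using assms by blast
  obtain c where c: "0 < c" "\<And>t. 1 < t \<Longrightarrow> c * (1/t) powr q \<le> (1/t) powr p * ln t powr (- a)"
    using upperlog[OF a q] by blast
  show "q \<in> upperQ M x"
  proof (rule upper_case[OF M q0 C c(1) D dbl, where p=p and \<Psi>="\<lambda>r R. ln (R / r) powr (- a) / R powr p"])
    fix r R :: real assume r: "0 < r" "2 * r \<le> R"
    show "C * measure M (ball x R) * (ln (R / r) powr (- a) / R powr p) \<le> D * measure M (ball x r) / r powr p"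
      using real2[OF M p D dbl r h] r by simp
    have t: "1 < R / r" using r by (simp add: field_simps)
    have e1: "r powr p * (ln (R / r) powr (- a) / R powr p) = (1 / (R / r)) powr p * ln (R / r) powr (- a)"
      using r by (simp add: powr_divide divide_simps)
    have e2: "1 / (R / r) = r / R" by simp
    show "c * (r / R) powr q \<le> r powr p * (ln (R / r) powr (- a) / R powr p)"
      using c(2)[OF t] unfolding e1 e2 .
  qed
qed

lemma part_g:
  assumes q: "0 < q"
    and "\<exists>C>0. \<forall>r R. 0 < 2 * r \<and> 2 * r \<le> R \<longrightarrow>
        ennreal (C * measure M (ball x r) / r powr q * R powr (q - p))
          \<le> cap_p M p (ball x r) (ball x R)"
  shows "q \<in> lowerQ M x"
proof -
  obtain C where C: "0 < C" and h: "\<And>r R. 0 < 2 * r \<Longrightarrow> 2 * r \<le> R \<Longrightarrow>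
        ennreal (C * measure M (ball x r) / r powr q * R powr (q - p)) \<le> cap_p M p (ball x r) (ball x R)"
    using assms by blast
  show ?thesis
  proof (rule lower_case[OF M q C, where K=1 and p=p and \<Phi>="\<lambda>r R. R powr (q - p) / r powr q"])
    fix r R :: real assume r: "0 < r" "2 * r \<le> R"
    show "C * measure M (ball x r) * (R powr (q - p) / r powr q) \<le> 2 powr p * measure M (ball x R) / R powr p"
      using real1[OF M p D dbl r h] r by simp
    show "0 < R powr (q - p) / r powr q" using r by simp
    have "R powr p * R powr (q - p) = R powr q" using r by (simp add: powr_add[symmetric])
    thus "1 / (R powr p * (R powr (q - p) / r powr q)) \<le> 1 * (r / R) powr q"
      using r by (simp add: powr_divide divide_simps)
  qed simp
qed

lemma part_h:
  assumes q: "0 < q"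
    and "\<exists>C>0. \<forall>r R. 0 < 2 * r \<and> 2 * r \<le> R \<longrightarrow>
        ennreal (C * measure M (ball x R) / R powr q * r powr (q - p))
          \<le> cap_p M p (ball x r) (ball x R)"
  shows "q \<in> upperQ M x"
proof -
  obtain C where C: "0 < C" and h: "\<And>r R. 0 < 2 * r \<Longrightarrow> 2 * r \<le> R \<Longrightarrow>
        ennreal (C * measure M (ball x R) / R powr q * r powr (q - p)) \<le> cap_p M p (ball x r) (ball x R)"
    using assms by blast
  show ?thesis
  proof (rule upper_case[OF M q C _ D dbl, where c=1 and p=p and \<Psi>="\<lambda>r R. r powr (q - p) / R powr q"])
    fix r R :: real assume r: "0 < r" "2 * r \<le> R"
    show "C * measure M (ball x R) * (r powr (q - p) / R powr q) \<le> D * measure M (ball x r) / r powr p"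
      using real2[OF M p D dbl r h] r by simp
    have "r powr p * r powr (q - p) = r powr q" using r by (simp add: powr_add[symmetric])
    thus "1 * (r / R) powr q \<le> r powr p * (r powr (q - p) / R powr q)"
      using r by (simp add: powr_divide divide_simps)
  qed simp
qed

end



theorem proposition9p1:
  fixes M :: "'a::metric_space measure" and p :: real and x :: 'a
  assumes "mms_standing M" and "1 \<le> p" and "doubling_at M x"
  shows
   "((\<exists>C>0. \<forall>r R. 0 < 2 * r \<and> 2 * r \<le> R \<longrightarrow>
        ennreal (C * measure M (ball x r) / r powr p) \<le> cap_p M p (ball x r) (ball x R))
      \<longrightarrow> p \<in> lowerQ M x)
  \<and> ((\<exists>C>0. \<forall>r R. 0 < 2 * r \<and> 2 * r \<le> R \<longrightarrow>
        ennreal (C * measure M (ball x R) / R powr p) \<le> cap_p M p (ball x r) (ball x R))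
      \<longrightarrow> p \<in> upperQ M x)
  \<and> ((\<exists>C>0. \<forall>r R. 0 < 2 * r \<and> 2 * r \<le> R \<longrightarrow>
        ennreal (C * measure M (ball x r) / r powr p * ln (R / r) powr (- p))
          \<le> cap_p M p (ball x r) (ball x R))
      \<longrightarrow> ereal p \<le> (SUP q \<in> lowerQ M x. ereal q))
  \<and> ((\<exists>C>0. \<forall>r R. 0 < 2 * r \<and> 2 * r \<le> R \<longrightarrow>
        ennreal (C * measure M (ball x R) / R powr p * ln (R / r) powr (- p))
          \<le> cap_p M p (ball x r) (ball x R))
      \<longrightarrow> (INF q \<in> upperQ M x. ereal q) \<le> ereal p)
  \<and> ((\<exists>C>0. \<forall>r R. 0 < 2 * r \<and> 2 * r \<le> R \<longrightarrow>
        ennreal (C * measure M (ball x r) / r powr p * ln (R / r) powr (1 - p))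
          \<le> cap_p M p (ball x r) (ball x R))
      \<longrightarrow> ereal p \<le> (SUP q \<in> lowerQ M x. ereal q))
  \<and> ((\<exists>C>0. \<forall>r R. 0 < 2 * r \<and> 2 * r \<le> R \<longrightarrow>
        ennreal (C * measure M (ball x R) / R powr p * ln (R / r) powr (1 - p))
          \<le> cap_p M p (ball x r) (ball x R))
      \<longrightarrow> (INF q \<in> upperQ M x. ereal q) \<le> ereal p)
  \<and> (\<forall>q>0. (\<exists>C>0. \<forall>r R. 0 < 2 * r \<and> 2 * r \<le> R \<longrightarrow>
        ennreal (C * measure M (ball x r) / r powr q * R powr (q - p))
          \<le> cap_p M p (ball x r) (ball x R))
      \<longrightarrow> q \<in> lowerQ M x)
  \<and> (\<forall>q>0. (\<exists>C>0. \<forall>r R. 0 < 2 * r \<and> 2 * r \<le> R \<longrightarrow>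
        ennreal (C * measure M (ball x R) / R powr q * r powr (q - p))
          \<le> cap_p M p (ball x r) (ball x R))
      \<longrightarrow> q \<in> upperQ M x)"
proof -
  note M = assms(1) and p = assms(2)
  obtain D where dbl: "\<And>t. 0 < t \<Longrightarrow> measure M (ball x (2 * t)) \<le> D * measure M (ball x t)"
    using assms(3) unfolding doubling_at_def by blast
  have D: "0 < D"
  proof (rule ccontr)
    assume "\<not> 0 < D"
    hence "D * measure M (ball x 1) \<le> 0" using mu_pos[OF M, of 1 x] by (simp add: mult_nonpos_nonneg)
    moreover have "0 < measure M (ball x (2 * 1))" using mu_pos[OF M, of "2 * 1" x] by simp
    ultimately show False using dbl[of 1] by simp
  qed
  have p0: "0 \<le> p" "0 \<le> p - 1" "p - 1 \<le> p" using p by auto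
  show ?thesis
  proof (intro conjI impI allI)
    show "p \<in> lowerQ M x" if "\<exists>C>0. \<forall>r R. 0 < 2 * r \<and> 2 * r \<le> R \<longrightarrow>
        ennreal (C * measure M (ball x r) / r powr p) \<le> cap_p M p (ball x r) (ball x R)"
      using part_a[OF M p D dbl that] .
    show "p \<in> upperQ M x" if "\<exists>C>0. \<forall>r R. 0 < 2 * r \<and> 2 * r \<le> R \<longrightarrow>
        ennreal (C * measure M (ball x R) / R powr p) \<le> cap_p M p (ball x r) (ball x R)"
      using part_b[OF M p D dbl that] .
    show "ereal p \<le> (SUP q \<in> lowerQ M x. ereal q)" if "\<exists>C>0. \<forall>r R. 0 < 2 * r \<and> 2 * r \<le> R \<longrightarrow>
        ennreal (C * measure M (ball x r) / r powr p * ln (R / r) powr (- p))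
          \<le> cap_p M p (ball x r) (ball x R)"
      using part_c[OF M p D dbl p0(1) order.refl that] .
    show "(INF q \<in> upperQ M x. ereal q) \<le> ereal p" if "\<exists>C>0. \<forall>r R. 0 < 2 * r \<and> 2 * r \<le> R \<longrightarrow>
        ennreal (C * measure M (ball x R) / R powr p * ln (R / r) powr (- p))
          \<le> cap_p M p (ball x r) (ball x R)"
      using part_d[OF M p D dbl p0(1) order.refl that] .
    show "ereal p \<le> (SUP q \<in> lowerQ M x. ereal q)" if "\<exists>C>0. \<forall>r R. 0 < 2 * r \<and> 2 * r \<le> R \<longrightarrow>
        ennreal (C * measure M (ball x r) / r powr p * ln (R / r) powr (1 - p))
          \<le> cap_p M p (ball x r) (ball x R)"
      using part_c[OF M p D dbl p0(2) p0(3)] that by simp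
    show "(INF q \<in> upperQ M x. ereal q) \<le> ereal p" if "\<exists>C>0. \<forall>r R. 0 < 2 * r \<and> 2 * r \<le> R \<longrightarrow>
        ennreal (C * measure M (ball x R) / R powr p * ln (R / r) powr (1 - p))
          \<le> cap_p M p (ball x r) (ball x R)"
      using part_d[OF M p D dbl p0(2) p0(3)] that by simp
    show "q \<in> lowerQ M x" if "0 < q" "\<exists>C>0. \<forall>r R. 0 < 2 * r \<and> 2 * r \<le> R \<longrightarrow>
        ennreal (C * measure M (ball x r) / r powr q * R powr (q - p))
          \<le> cap_p M p (ball x r) (ball x R)" for q
      using part_g[OF M p D dbl that] .
    show "q \<in> upperQ M x" if "0 < q" "\<exists>C>0. \<forall>r R. 0 < 2 * r \<and> 2 * r \<le> R \<longrightarrow>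
        ennreal (C * measure M (ball x R) / R powr q * r powr (q - p))
          \<le> cap_p M p (ball x r) (ball x R)" for q
      using part_h[OF M p D dbl that] .
  qed
qed


end
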